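(* Let $f=\frac1n\sum_{i=1}^n f_i$, where each $f_i:\mathbb{R}^d\to\mathbb{R}$ is differentiable, bounded below by $f_i^{\inf}\in\mathbb{R}$, and ${\bf L}_i$-matrix smooth with ${\bf L}_i\in\mathbb{S}^d_{++}$. Assume $f\ge f^{\inf}$ on $\mathbb{R}^d$ and $f$ is ${\bf L}$-matrix smooth with ${\bf L}\in\mathbb{S}^d_+$. Let $\{{\bf T}_i^k:i\in[n],k\ge0\}$ be mutually independent random matrices with common distribution $\mathcal T$ on $\mathbb{S}^d_+$ and $\mathbb{E}[{\bf T}_i^k]={\bf I}_d$. Let ${\bf D}\in\mathbb{S}^d_{++}$ satisfy ${\bf D}{\bf L}{\bf D}\preceq{\bf D}$, fix $x^0$, and let $$x^{k+1}=x^k-\frac1n\sum_{i=1}^n{\bf T}_i^k{\bf D}\nabla f_i(x^k).$$ Then for every $K\ge1$, $$\min_{0\le k\le K-1}\mathbb{E}\Big[\|\nabla f(x^k)\|^2_{{\bf D}/\det({\bf D})^{1/d}}\Big]\le\frac{2(1+\frac{\lambda'_{{\bf D}}}{n})^K(f(x^0)-f^{\inf})}{\det({\bf D})^{1/d}K}+\frac{2\lambda'_{{\bf D}}\Delta^{\inf}}{\det({\bf D})^{1/d}n},$$ where $\Delta^{\inf}:=f^{\inf}-\frac1n\sum_if_i^{\inf}$ and $\lambda'_{{\bf D}}:=\max_i\lambda_{\max}\big(\mathbb{E}[{\bf L}_i^{1/2}{\bf D}({\bf T}_i^k-{\bf I}_d){\bf L}({\bf T}_i^k-{\bf I}_d){\bf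 D}{\bf L}_i^{1/2}]\big)$.
   Context: A differentiable $g$ is ${\bf M}$-matrix smooth if $g(x)\le g(y)+\langle\nabla g(y),x-y\rangle+\frac12\langle{\bf M}(x-y),x-y\rangle$ for all $x,y$. $\mathbb{S}^d_{+}$/$\mathbb{S}^d_{++}$: symmetric positive semidefinite/definite matrices; $\preceq$ Loewner order; $\|x\|_{{\bf Q}}^2:=\langle{\bf Q}x,x\rangle$. All expectations assumed finite. *)

theory Defs
  imports "HOL-Probability.Probability"
begin

type_synonym 'd rmat = "real^'d^'d"

definition sym_mat :: "('d::finite) rmat \<Rightarrow> bool" where
  "sym_mat A \<longleftrightarrow> transpose A = A"

definition psd :: "('d::finite) rmat \<Rightarrow> bool" where
  "psd A \<longleftrightarrow> sym_mat A \<and> (\<forall>x::real^'d. 0 \<le> x \<bullet> (A *v x))"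

definition pd :: "('d::finite) rmat \<Rightarrow> bool" where
  "pd A \<longleftrightarrow> sym_mat A \<and> (\<forall>x::real^'d. x \<noteq> 0 \<longrightarrow> 0 < x \<bullet> (A *v x))"

definition loewner_le :: "('d::finite) rmat \<Rightarrow> 'd rmat \<Rightarrow> bool" where
  "loewner_le A B \<longleftrightarrow> psd (B - A)"

definition qnorm2 :: "('d::finite) rmat \<Rightarrow> real^'d \<Rightarrow> real" where
  "qnorm2 Q x = (Q *v x) \<bullet> x"

definition matrix_smooth :: "('d::finite) rmat \<Rightarrow> (real^'d \<Rightarrow> real) \<Rightarrow> (real^'d \<Rightarrow> real^'d) \<Rightarrow> bool" where
  "matrix_smooth M g gg \<longleftrightarrow>
     (\<forall>x y. g x \<le> g y + gg y \<bullet> (x - y) + 1/2 * ((M *v (x - y)) \<bullet> (x - y)))"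

definition msqrt :: "('d::finite) rmat \<Rightarrow> 'd rmat" where
  "msqrt A = (THE S. psd S \<and> S ** S = A)"

definition lambda_max :: "('d::finite) rmat \<Rightarrow> real" where
  "lambda_max A = Max {c. \<exists>v. v \<noteq> 0 \<and> A *v v = c *\<^sub>R v}"

primrec iter :: "nat \<Rightarrow> (nat \<Rightarrow> real^'d \<Rightarrow> real^'d) \<Rightarrow> (nat \<Rightarrow> nat \<Rightarrow> 'a \<Rightarrow> ('d::finite) rmat)
    \<Rightarrow> 'd rmat \<Rightarrow> real^'d \<Rightarrow> nat \<Rightarrow> 'a \<Rightarrow> real^'d" where
  "iter n gf T D x0 0 \<omega> = x0"
| "iter n gf T D x0 (Suc k) \<omega> =
     iter n gf T D x0 k \<omega> - (1 / real n) *\<^sub>R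
       (\<Sum>i<n. T i k \<omega> *v (D *v gf i (iter n gf T D x0 k \<omega>)))"

end

theory Submission
  imports Defs
begin


lemma sym_inner:
  fixes A :: "real^'n^'n"
  assumes "sym_mat A"
  shows "(A *v x) \<bullet> y = x \<bullet> (A *v y)"
proof -
  have "x \<bullet> (A *v y) = (x v* A) \<bullet> y" by (simp add: dot_lmul_matrix)
  also have "x v* A = transpose A *v x" by simp
  also have "transpose A = A" using assms by (simp add: sym_mat_def)
  finally show ?thesis by simp
qed

lemma quad_expand:
  fixes A :: "real^'n^'n"
  assumes "sym_mat A"
  shows "(v + t *\<^sub>R z) \<bullet> (A *v (v + t *\<^sub>R z)) = v \<bullet> (A *v v) + 2 * t * (z \<bullet> (A *v v)) + t^2 * (z \<bullet> (A *v z))"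
proof -
  have "v \<bullet> (A *v z) = z \<bullet> (A *v v)" using sym_inner[OF assms, of z v] by (simp add: inner_commute)
  then show ?thesis
    by (simp add: matrix_vector_right_distrib matrix_vector_mult_scaleR inner_add_left inner_add_right power2_eq_square algebra_simps)
qed

lemma rayleigh:
  fixes A :: "real^'n^'n"
  assumes sym: "sym_mat A" and V: "subspace V" and inv: "\<forall>x\<in>V. A *v x \<in> V" and ne: "V \<noteq> {0}"
  shows "\<exists>v \<mu>. v \<in> V \<and> norm v = 1 \<and> A *v v = \<mu> *\<^sub>R v \<and> (\<forall>w\<in>V. w \<bullet> (A *v w) \<le> \<mu> * (w \<bullet> w))"
proof -
  define S where "S = V \<inter> sphere 0 1"
  have cS: "compact S" unfolding S_def
    by (rule closed_Int_compact) (simp_all add: V closed_subspace)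
  obtain x where x: "x \<in> V" "x \<noteq> 0" using ne V subspace_0 by blast
  have "(1 / norm x) *\<^sub>R x \<in> S" unfolding S_def using x V by (simp add: subspace_scale)
  then have neS: "S \<noteq> {}" by blast
  have cont: "continuous_on S (\<lambda>w. w \<bullet> (A *v w))"
    by (intro continuous_intros linear_continuous_on bounded_linear_intros) (simp add: linear_conv_bounded_linear[symmetric])
  obtain v where v: "v \<in> S" and vmax: "\<And>w. w \<in> S \<Longrightarrow> w \<bullet> (A *v w) \<le> v \<bullet> (A *v v)"
    using continuous_attains_sup[OF cS neS cont] by blast
  define \<mu> where "\<mu> = v \<bullet> (A *v v)"
  have vV: "v \<in> V" and nv: "norm v = 1" using v by (auto simp: S_def)
  have vv: "v \<bullet> v = 1" using nv by (simp add: norm_eq_1)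
  have bound: "w \<bullet> (A *v w) \<le> \<mu> * (w \<bullet> w)" if w: "w \<in> V" for w
  proof (cases "w = 0")
    case True then show ?thesis by simp
  next
    case False
    define w' where "w' = (1 / norm w) *\<^sub>R w"
    have "w' \<in> S" unfolding S_def w'_def using w False V by (simp add: subspace_scale)
    then have "w' \<bullet> (A *v w') \<le> \<mu>" using vmax \<mu>_def by blast
    moreover have "w' \<bullet> (A *v w') = (w \<bullet> (A *v w)) / (norm w)^2"
      unfolding w'_def by (simp add: matrix_vector_mult_scaleR power2_eq_square)
    moreover have "w \<bullet> w = (norm w)^2" by (simp add: power2_norm_eq_inner)
    moreover have "norm w > 0" using False by simp
    ultimately show ?thesis by (simp add: divide_le_eq mult.commute)
  qed
  define z where "z = A *v v - \<mu> *\<^sub>R v"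
  have zV: "z \<in> V" unfolding z_def using inv vV V by (simp add: subspace_diff subspace_scale)
  define C where "C = z \<bullet> (A *v z) - \<mu> * (z \<bullet> z)"
  have key: "2 * t * (z \<bullet> z) + t^2 * C \<le> 0" for t
  proof -
    have "v + t *\<^sub>R z \<in> V" using vV zV V by (simp add: subspace_add subspace_scale)
    from bound[OF this] have "(v + t *\<^sub>R z) \<bullet> (A *v (v + t *\<^sub>R z)) \<le> \<mu> * ((v + t *\<^sub>R z) \<bullet> (v + t *\<^sub>R z))" .
    moreover have "(v + t *\<^sub>R z) \<bullet> (v + t *\<^sub>R z) = 1 + 2 * t * (v \<bullet> z) + t^2 * (z \<bullet> z)"
      using vv by (simp add: inner_add_left inner_add_right power2_eq_square inner_commute algebra_simps)
    moreover have "z \<bullet> (A *v v) = z \<bullet> z + \<mu> * (v \<bullet> z)"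
      unfolding z_def by (simp add: inner_diff_right inner_diff_left inner_commute algebra_simps)
    ultimately have "\<mu> + 2 * t * (z \<bullet> z + \<mu> * (v \<bullet> z)) + t^2 * (z \<bullet> (A *v z)) \<le> \<mu> * (1 + 2 * t * (v \<bullet> z) + t^2 * (z \<bullet> z))"
      using quad_expand[OF sym, of v t z] unfolding \<mu>_def[symmetric] by simp
    moreover have "\<mu> * (1 + 2 * t * (v \<bullet> z) + t^2 * (z \<bullet> z)) = \<mu> + 2 * t * (\<mu> * (v \<bullet> z)) + t^2 * (\<mu> * (z \<bullet> z))"
      by (simp add: ring_distribs mult_ac)
    moreover have "2 * t * (z \<bullet> z + \<mu> * (v \<bullet> z)) = 2 * t * (z \<bullet> z) + 2 * t * (\<mu> * (v \<bullet> z))"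
      by (simp only: distrib_left)
    moreover have "t^2 * (z \<bullet> (A *v z) - \<mu> * (z \<bullet> z)) = t^2 * (z \<bullet> (A *v z)) - t^2 * (\<mu> * (z \<bullet> z))"
      by (simp only: right_diff_distrib)
    ultimately show ?thesis unfolding C_def by linarith
  qed
  have "z \<bullet> z = 0"
  proof (rule ccontr)
    assume "z \<bullet> z \<noteq> 0"
    then have zz: "z \<bullet> z > 0" by (simp add: order_less_le)
    define t where "t = (z \<bullet> z) / (\<bar>C\<bar> + 1)"
    have t: "t > 0" unfolding t_def using zz by simp
    have "- (t^2 * C) \<le> t^2 * \<bar>C\<bar>" using mult_left_mono[of "-C" "\<bar>C\<bar>" "t^2"] by simp
    then have "2 * t * (z \<bullet> z) \<le> t^2 * \<bar>C\<bar>" using key[of t] by linarith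
    then have "2 * (z \<bullet> z) \<le> t * \<bar>C\<bar>" using t by (simp add: power2_eq_square)
    moreover have "t * \<bar>C\<bar> < z \<bullet> z"
    proof -
      have "\<bar>C\<bar> / (\<bar>C\<bar> + 1) < 1" by simp
      then have "(z \<bullet> z) * (\<bar>C\<bar> / (\<bar>C\<bar> + 1)) < (z \<bullet> z) * 1" using zz by (rule mult_strict_left_mono)
      then show ?thesis unfolding t_def by simp
    qed
    ultimately show False using zz by linarith
  qed
  then have "A *v v = \<mu> *\<^sub>R v" unfolding z_def by simp
  then show ?thesis using vV nv bound by blast
qed


definition orthonormal :: "(real^'n) set \<Rightarrow> bool" where
  "orthonormal B \<longleftrightarrow> finite B \<and> pairwise orthogonal B \<and> (\<forall>b\<in>B. norm b = 1)"

lemma orthonormal_inner_sum: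
  assumes "orthonormal B" "b \<in> B"
  shows "b \<bullet> (\<Sum>b'\<in>B. c b' *\<^sub>R b') = c b"
proof -
  have "b \<bullet> (\<Sum>b'\<in>B. c b' *\<^sub>R b') = (\<Sum>b'\<in>B. c b' * (b \<bullet> b'))"
    by (simp add: inner_sum_right)
  also have "\<dots> = (\<Sum>b'\<in>B. if b' = b then c b else 0)"
  proof (rule sum.cong)
    fix b' assume "b' \<in> B"
    then show "c b' * (b \<bullet> b') = (if b' = b then c b else 0)"
      using assms unfolding orthonormal_def pairwise_def orthogonal_def
      by (auto simp: inner_commute norm_eq_1)
  qed simp
  also have "\<dots> = c b" using assms by (simp add: orthonormal_def)
  finally show ?thesis .
qed

lemma orthonormal_expand:
  assumes B: "orthonormal B" and x: "x \<in> span B"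
  shows "x = (\<Sum>b\<in>B. (b \<bullet> x) *\<^sub>R b)"
proof -
  define y where "y = x - (\<Sum>b\<in>B. (b \<bullet> x) *\<^sub>R b)"
  have yB: "y \<in> span B" unfolding y_def
    by (intro span_diff x span_sum span_mul span_base) auto
  have "orthogonal y b" if "b \<in> B" for b
  proof -
    have "b \<bullet> y = 0"
      using orthonormal_inner_sum[OF B that, of "\<lambda>b. b \<bullet> x"] unfolding y_def
      by (simp only: inner_diff_right)
    then show ?thesis by (simp add: orthogonal_def inner_commute)
  qed
  then have "orthogonal y y" using orthogonal_to_span[OF yB] by blast
  then have "y = 0" by (simp add: orthogonal_def)
  then show ?thesis unfolding y_def by simp
qed

lemma spectral_sub:
  fixes A :: "real^'n^'n"
  assumes sym: "sym_mat A"
  shows "subspace V \<Longrightarrow> (\<forall>x\<in>V. A *v x \<in> V) \<Longrightarrow>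
    \<exists>B. B \<subseteq> V \<and> orthonormal B \<and> (\<forall>b\<in>B. \<exists>c. A *v b = c *\<^sub>R b) \<and> V \<subseteq> span B"
proof (induction "dim V" arbitrary: V rule: less_induct)
  case less
  show ?case
  proof (cases "V = {0}")
    case True
    then show ?thesis by (intro exI[of _ "{}"]) (auto simp: orthonormal_def)
  next
    case False
    obtain v \<mu> where v: "v \<in> V" "norm v = 1" "A *v v = \<mu> *\<^sub>R v"
      using rayleigh[OF sym less.prems False] by blast
    define V' where "V' = {w \<in> V. v \<bullet> w = 0}"
    have sV': "subspace V'" unfolding V'_def subspace_def using less.prems(1)
      by (auto simp: subspace_0 subspace_add subspace_scale inner_add_right)
    have iV': "\<forall>x\<in>V'. A *v x \<in> V'"
    proof
      fix x assume x: "x \<in> V'"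
      have "v \<bullet> (A *v x) = (A *v v) \<bullet> x" using sym_inner[OF sym] by simp
      also have "\<dots> = 0" using v x by (simp add: V'_def)
      finally show "A *v x \<in> V'" using x less.prems(2) by (simp add: V'_def)
    qed
    have vv: "v \<bullet> v = 1" using v by (simp add: norm_eq_1)
    have "v \<notin> V'" using vv by (simp add: V'_def)
    moreover have "V' \<subseteq> V" by (auto simp: V'_def)
    ultimately have "V' \<subset> V" using v(1) by blast
    then have "span V' \<subset> span V" using sV' less.prems(1) by (simp add: span_eq_iff[THEN iffD2])
    then have "dim V' < dim V" by (rule dim_psubset)
    from less.hyps[OF this sV' iV'] obtain B' where
      B': "B' \<subseteq> V'" "orthonormal B'" "\<forall>b\<in>B'. \<exists>c. A *v b = c *\<^sub>R b" "V' \<subseteq> span B'" by blast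
    have vB': "v \<notin> B'" using B'(1) vv by (auto simp: V'_def)
    have on: "orthonormal (insert v B')"
      using B'(1,2) v(2) vB' unfolding orthonormal_def
      by (auto simp: pairwise_insert orthogonal_def V'_def inner_commute)
    have sp: "V \<subseteq> span (insert v B')"
    proof
      fix w assume w: "w \<in> V"
      have "w - (v \<bullet> w) *\<^sub>R v \<in> V'" unfolding V'_def using w v less.prems(1) vv
        by (simp add: subspace_diff subspace_scale inner_diff_right)
      then have "w - (v \<bullet> w) *\<^sub>R v \<in> span (insert v B')" using B'(4) span_mono[of B' "insert v B'"] by blast
      moreover have "(v \<bullet> w) *\<^sub>R v \<in> span (insert v B')" by (simp add: span_base span_mul)
      ultimately have "(w - (v \<bullet> w) *\<^sub>R v) + (v \<bullet> w) *\<^sub>R v \<in> span (insert v B')" by (rule span_add)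
      then show "w \<in> span (insert v B')" by simp
    qed
    show ?thesis
      by (intro exI[of _ "insert v B'"]) (use B' v on sp V'_def in auto)
  qed
qed

lemma spectral:
  fixes A :: "real^'n^'n"
  assumes "sym_mat A"
  shows "\<exists>B. orthonormal B \<and> (\<forall>b\<in>B. \<exists>c. A *v b = c *\<^sub>R b) \<and> span B = UNIV"
  using spectral_sub[OF assms, of UNIV] by auto


lemma sym_from_inner:
  fixes A :: "real^'n^'n"
  assumes "\<And>x y. (A *v x) \<bullet> y = x \<bullet> (A *v y)"
  shows "sym_mat A"
proof -
  have "transpose A *v x = A *v x" for x
  proof -
    have "(transpose A *v x - A *v x) \<bullet> y = 0" for y
    proof -
      have "(transpose A *v x) \<bullet> y = x \<bullet> (A *v y)" by (simp add: dot_lmul_matrix)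
      then show ?thesis using assms[of x y] by (simp add: inner_diff_left)
    qed
    from this[of "transpose A *v x - A *v x"] show ?thesis by simp
  qed
  then show ?thesis unfolding sym_mat_def by (simp add: matrix_eq)
qed

lemma eigen_choice:
  fixes A :: "real^'n^'n"
  assumes "\<forall>b\<in>B. \<exists>c. A *v b = c *\<^sub>R b"
  obtains lam where "\<forall>b\<in>B. A *v b = lam b *\<^sub>R b"
  using assms by metis

lemma eigen_in_basis:
  fixes A :: "real^'n^'n"
  assumes sym: "sym_mat A" and B: "orthonormal B" "span B = UNIV" and lam: "\<forall>b\<in>B. A *v b = lam b *\<^sub>R b"
    and u: "A *v u = \<mu> *\<^sub>R u" and b: "b \<in> B"
  shows "lam b * (b \<bullet> u) = \<mu> * (b \<bullet> u)"
proof -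
  have "lam b * (b \<bullet> u) = (A *v b) \<bullet> u" using lam b by simp
  also have "\<dots> = b \<bullet> (A *v u)" by (rule sym_inner[OF sym])
  also have "\<dots> = \<mu> * (b \<bullet> u)" using u by simp
  finally show ?thesis .
qed

lemma eigenvalues_finite:
  fixes A :: "real^'n^'n"
  assumes sym: "sym_mat A"
  shows "finite {c. \<exists>v. v \<noteq> 0 \<and> A *v v = c *\<^sub>R v}"
proof -
  obtain B where B: "orthonormal B" "\<forall>b\<in>B. \<exists>c. A *v b = c *\<^sub>R b" "span B = UNIV"
    using spectral[OF sym] by blast
  obtain lam where lam: "\<forall>b\<in>B. A *v b = lam b *\<^sub>R b" using eigen_choice[OF B(2)] by blast
  have "{c. \<exists>v. v \<noteq> 0 \<and> A *v v = c *\<^sub>R v} \<subseteq> lam ` B"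
  proof
    fix c assume "c \<in> {c. \<exists>v. v \<noteq> 0 \<and> A *v v = c *\<^sub>R v}"
    then obtain u where u: "u \<noteq> 0" "A *v u = c *\<^sub>R u" by blast
    have "\<exists>b\<in>B. b \<bullet> u \<noteq> 0"
    proof (rule ccontr)
      assume "\<not> ?thesis"
      then have "u = 0" using orthonormal_expand[OF B(1), of u] B(3) by simp
      then show False using u by simp
    qed
    then obtain b where b: "b \<in> B" "b \<bullet> u \<noteq> 0" by blast
    have "lam b * (b \<bullet> u) = c * (b \<bullet> u)" by (rule eigen_in_basis[OF sym B(1) B(3) lam u(2) b(1)])
    then have "c = lam b" using b(2) by simp
    then show "c \<in> lam ` B" using b by blast
  qed
  moreover have "finite B" using B by (simp add: orthonormal_def)
  ultimately show ?thesis using finite_subset by blast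
qed

lemma UNIV_ne_0: "(UNIV :: (real^'n) set) \<noteq> {0}"
proof -
  have "(axis undefined 1 :: real^'n) \<noteq> 0" by (simp add: axis_eq_0_iff)
  then show ?thesis by blast
qed

lemma lambda_max_bound:
  fixes A :: "real^'n^'n"
  assumes sym: "sym_mat A"
  shows "w \<bullet> (A *v w) \<le> lambda_max A * (w \<bullet> w)"
    and "psd A \<Longrightarrow> 0 \<le> lambda_max A"
proof -
  obtain v \<mu> where v: "norm v = 1" "A *v v = \<mu> *\<^sub>R v" and bd: "\<forall>w. w \<bullet> (A *v w) \<le> \<mu> * (w \<bullet> w)"
    using rayleigh[OF sym subspace_UNIV _ UNIV_ne_0] by auto
  have "v \<noteq> 0" using v by auto
  then have "\<mu> \<in> {c. \<exists>v. v \<noteq> 0 \<and> A *v v = c *\<^sub>R v}" using v by blast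
  then have mu: "\<mu> \<le> lambda_max A" unfolding lambda_max_def using eigenvalues_finite[OF sym] by (rule Max_ge[rotated])
  have "\<mu> * (w \<bullet> w) \<le> lambda_max A * (w \<bullet> w)" using mu by (simp add: mult_right_mono)
  then show "w \<bullet> (A *v w) \<le> lambda_max A * (w \<bullet> w)" using bd by (meson order_trans)
  assume "psd A"
  then have "0 \<le> v \<bullet> (A *v v)" by (simp add: psd_def)
  also have "\<dots> = \<mu>" using v by (simp add: norm_eq_1)
  finally show "0 \<le> lambda_max A" using mu by simp
qed

definition outerp :: "real^'n \<Rightarrow> real^'n^'n" where
  "outerp b = (\<chi> i j. b $ i * b $ j)"

lemma outerp_mult: "outerp b *v x = (b \<bullet> x) *\<^sub>R b"
proof -
  have "(\<Sum>j\<in>UNIV. b $ i * b $ j * x $ j) = (\<Sum>j\<in>UNIV. b $ j * x $ j) * b $ i" for i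
    unfolding sum_distrib_right by (rule sum.cong) auto
  then show ?thesis by (simp add: outerp_def vec_eq_iff matrix_vector_mult_def inner_vec_def)
qed

lemma sum_mat_vec:
  fixes M :: "'i \<Rightarrow> real^'n^'n"
  shows "(\<Sum>i\<in>I. M i) *v x = (\<Sum>i\<in>I. M i *v x)"
proof (induction I rule: infinite_finite_induct)
  case (insert a F)
  then show ?case by (simp add: matrix_vector_mult_add_rdistrib)
qed auto

lemma mat_vec_sum:
  fixes A :: "real^'n^'n"
  shows "A *v (\<Sum>i\<in>I. v i) = (\<Sum>i\<in>I. A *v v i)"
proof (induction I rule: infinite_finite_induct)
  case (insert a F)
  then show ?case by (simp add: matrix_vector_right_distrib)
qed auto

lemma msqrt_props:
  fixes A :: "real^'n^'n"
  assumes psd: "psd A"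
  shows "psd (msqrt A)" "msqrt A ** msqrt A = A"
proof -
  have sym: "sym_mat A" using psd by (simp add: psd_def)
  obtain B where B: "orthonormal B" "\<forall>b\<in>B. \<exists>c. A *v b = c *\<^sub>R b" "span B = UNIV"
    using spectral[OF sym] by blast
  obtain lam where lam: "\<forall>b\<in>B. A *v b = lam b *\<^sub>R b" using eigen_choice[OF B(2)] by blast
  have lam0: "lam b \<ge> 0" if "b \<in> B" for b
  proof -
    have "0 \<le> b \<bullet> (A *v b)" using psd by (simp add: psd_def)
    also have "\<dots> = lam b" using lam that B(1) by (simp add: orthonormal_def norm_eq_1)
    finally show ?thesis .
  qed
  define S0 where "S0 = (\<Sum>b\<in>B. sqrt (lam b) *\<^sub>R outerp b)"
  have S0v: "S0 *v x = (\<Sum>b\<in>B. (sqrt (lam b) * (b \<bullet> x)) *\<^sub>R b)" for x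
    unfolding S0_def sum_mat_vec by (simp add: scaleR_matrix_vector_assoc[symmetric] outerp_mult)
  have inS0: "b \<bullet> (S0 *v x) = sqrt (lam b) * (b \<bullet> x)" if "b \<in> B" for b x
    unfolding S0v by (rule orthonormal_inner_sum[OF B(1) that])
  have expand: "x = (\<Sum>b\<in>B. (b \<bullet> x) *\<^sub>R b)" for x
    using orthonormal_expand[OF B(1)] B(3) by simp
  have S0sym: "sym_mat S0"
  proof (rule sym_from_inner)
    fix x y
    have "(S0 *v x) \<bullet> y = (\<Sum>b\<in>B. sqrt (lam b) * (b \<bullet> x) * (b \<bullet> y))"
      unfolding S0v by (simp add: inner_sum_left)
    moreover have "x \<bullet> (S0 *v y) = (\<Sum>b\<in>B. sqrt (lam b) * (b \<bullet> x) * (b \<bullet> y))"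
      unfolding S0v inner_sum_right by (intro sum.cong refl) (simp add: inner_commute[of x])
    ultimately show "(S0 *v x) \<bullet> y = x \<bullet> (S0 *v y)" by simp
  qed
  have S0psd: "psd S0"
  proof -
    have "0 \<le> x \<bullet> (S0 *v x)" for x
    proof -
      have "x \<bullet> (S0 *v x) = (\<Sum>b\<in>B. sqrt (lam b) * (b \<bullet> x) * (b \<bullet> x))"
        unfolding S0v inner_sum_right by (intro sum.cong refl) (simp add: inner_commute[of x])
      also have "\<dots> \<ge> 0" using lam0 by (intro sum_nonneg) (simp add: mult.assoc)
      finally show ?thesis .
    qed
    then show ?thesis using S0sym by (simp add: psd_def)
  qed
  have S0sq: "S0 ** S0 = A"
  proof -
    have "(S0 ** S0) *v x = A *v x" for x
    proof -
      have "(S0 ** S0) *v x = S0 *v (S0 *v x)" by (simp add: matrix_vector_mul_assoc)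
      also have "\<dots> = (\<Sum>b\<in>B. (lam b * (b \<bullet> x)) *\<^sub>R b)"
        unfolding S0v[of "S0 *v x"] using lam0
        by (intro sum.cong refl) (simp add: inS0 mult.assoc[symmetric])
      also have "\<dots> = A *v (\<Sum>b\<in>B. (b \<bullet> x) *\<^sub>R b)"
        unfolding mat_vec_sum using lam by (intro sum.cong refl) (simp add: matrix_vector_mult_scaleR)
      also have "\<dots> = A *v x" using expand[of x] by simp
      finally show ?thesis .
    qed
    then show ?thesis by (simp add: matrix_eq)
  qed
  have S0eig: "S0 *v u = sqrt \<mu> *\<^sub>R u" if u: "A *v u = \<mu> *\<^sub>R u" for u \<mu>
  proof -
    have "S0 *v u = (\<Sum>b\<in>B. (sqrt \<mu> * (b \<bullet> u)) *\<^sub>R b)"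
      unfolding S0v
    proof (intro sum.cong refl)
      fix b assume b: "b \<in> B"
      have "lam b * (b \<bullet> u) = \<mu> * (b \<bullet> u)" by (rule eigen_in_basis[OF sym B(1) B(3) lam u b])
      then have "sqrt (lam b) * (b \<bullet> u) = sqrt \<mu> * (b \<bullet> u)" by (cases "b \<bullet> u = 0") auto
      then show "(sqrt (lam b) * (b \<bullet> u)) *\<^sub>R b = (sqrt \<mu> * (b \<bullet> u)) *\<^sub>R b" by simp
    qed
    also have "\<dots> = sqrt \<mu> *\<^sub>R (\<Sum>b\<in>B. (b \<bullet> u) *\<^sub>R b)" by (simp add: scaleR_sum_right)
    also have "\<dots> = sqrt \<mu> *\<^sub>R u" using expand[of u] by simp
    finally show ?thesis .
  qed
  have uniq: "S = S0" if S: "psd S" "S ** S = A" for S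
  proof -
    have Ssym: "sym_mat S" using S by (simp add: psd_def)
    obtain C where C: "orthonormal C" "\<forall>b\<in>C. \<exists>c. S *v b = c *\<^sub>R b" "span C = UNIV"
      using spectral[OF Ssym] by blast
    obtain s where s: "\<forall>b\<in>C. S *v b = s b *\<^sub>R b" using eigen_choice[OF C(2)] by blast
    have eq: "S *v c = S0 *v c" if c: "c \<in> C" for c
    proof -
      have nc: "c \<bullet> c = 1" using C(1) c by (simp add: orthonormal_def norm_eq_1)
      have "0 \<le> c \<bullet> (S *v c)" using S by (simp add: psd_def)
      then have s0: "s c \<ge> 0" using s c nc by simp
      have "A *v c = S *v (S *v c)" using S(2) by (simp add: matrix_vector_mul_assoc)
      also have "\<dots> = (s c)^2 *\<^sub>R c" using s c by (simp add: matrix_vector_mult_scaleR power2_eq_square)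
      finally have "S0 *v c = sqrt ((s c)^2) *\<^sub>R c" by (rule S0eig)
      then show ?thesis using s0 s c by simp
    qed
    have "S *v x = S0 *v x" for x
    proof -
      have xe: "x = (\<Sum>c\<in>C. (c \<bullet> x) *\<^sub>R c)" using orthonormal_expand[OF C(1)] C(3) by simp
      have "S *v x = (\<Sum>c\<in>C. (c \<bullet> x) *\<^sub>R (S *v c))"
        by (subst xe) (simp add: mat_vec_sum matrix_vector_mult_scaleR)
      also have "\<dots> = (\<Sum>c\<in>C. (c \<bullet> x) *\<^sub>R (S0 *v c))" using eq by simp
      also have "\<dots> = S0 *v x"
        by (subst (2) xe) (simp add: mat_vec_sum matrix_vector_mult_scaleR)
      finally show ?thesis .
    qed
    then show ?thesis by (simp add: matrix_eq)
  qed
  have "msqrt A = S0" unfolding msqrt_def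
    by (rule the_equality) (use S0psd S0sq in blast, use uniq in blast)
  then show "psd (msqrt A)" "msqrt A ** msqrt A = A" using S0psd S0sq by auto
qed


lemma pd_psd: "pd A \<Longrightarrow> psd A"
  unfolding pd_def psd_def by (metis inner_zero_left matrix_vector_mult_0_right order_le_less)

lemma pd_inj:
  fixes A :: "real^'n^'n"
  assumes "pd A" shows "inj (\<lambda>x. A *v x)"
proof -
  have "x = 0" if "A *v x = 0" for x
    using assms that unfolding pd_def by (metis inner_zero_right less_irrefl)
  then show ?thesis
    by (metis (no_types, lifting) inj_on_def eq_iff_diff_eq_0 matrix_vector_mult_diff_distrib)
qed

lemma pd_surj:
  fixes A :: "real^'n^'n"
  assumes "pd A" shows "surj (\<lambda>x. A *v x)"
  using linear_inj_imp_surj[OF matrix_vector_mul_linear pd_inj[OF assms]] .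

lemma msqrt_pd:
  fixes A :: "real^'n^'n"
  assumes "pd A"
  shows "psd (msqrt A)" "msqrt A ** msqrt A = A" "sym_mat (msqrt A)" "surj (\<lambda>x. msqrt A *v x)"
proof -
  show ps: "psd (msqrt A)" and sq: "msqrt A ** msqrt A = A" using msqrt_props pd_psd[OF assms] by auto
  then show "sym_mat (msqrt A)" by (simp add: psd_def)
  show "surj (\<lambda>x. msqrt A *v x)"
  proof -
    have "y \<in> range (\<lambda>x. msqrt A *v x)" for y
    proof -
      obtain x where "A *v x = y" using pd_surj[OF assms] by (metis surjD)
      then have "msqrt A *v (msqrt A *v x) = y" using sq by (simp add: matrix_vector_mul_assoc)
      then show ?thesis by blast
    qed
    then show ?thesis by blast
  qed
qed

lemma det_pd_pos:
  fixes D :: "real^'n^'n"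
  assumes "pd D" shows "det D > 0"
proof -
  have "det D \<noteq> 0" using det_nz_iff_inj[of "\<lambda>x. D *v x"] pd_inj[OF assms] by simp
  moreover have "det D = det (msqrt D) * det (msqrt D)" using msqrt_pd(2)[OF assms] det_mul by metis
  ultimately show ?thesis using zero_le_square[of "det (msqrt D)"] by linarith
qed

lemma mat_bound:
  fixes S :: "real^'n^'n"
  obtains B where "B > 0" "\<And>h. norm (S *v h) \<le> B * norm h"
  using bounded_linear.pos_bounded[OF matrix_vector_mul_bounded_linear[of S]] by (auto simp: mult.commute)


lemma cont_mv: "continuous_on UNIV (\<lambda>p::(real^'n^'m) \<times> (real^'n). fst p *v snd p)"
  unfolding matrix_vector_mult_def by (intro continuous_intros)

lemma cont_mm: "continuous_on UNIV (\<lambda>p::(real^'n^'m) \<times> (real^'k^'n). fst p ** snd p)"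
  unfolding matrix_matrix_mult_def by (intro continuous_intros)

lemma measurable_mv[measurable (raw)]:
  fixes A :: "'a \<Rightarrow> real^'n^'m"
  assumes "A \<in> borel_measurable N" "v \<in> borel_measurable N"
  shows "(\<lambda>x. A x *v v x) \<in> borel_measurable N"
  using borel_measurable_continuous_Pair[OF assms cont_mv] by simp

lemma measurable_mm[measurable (raw)]:
  fixes A :: "'a \<Rightarrow> real^'n^'m" and B :: "'a \<Rightarrow> real^'k^'n"
  assumes "A \<in> borel_measurable N" "B \<in> borel_measurable N"
  shows "(\<lambda>x. A x ** B x) \<in> borel_measurable N"
  using borel_measurable_continuous_Pair[OF assms cont_mm] by simp

lemma measurable_vec_nth[measurable (raw)]:
  fixes v :: "'a \<Rightarrow> ('b::real_normed_vector)^'n"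
  assumes "v \<in> borel_measurable N"
  shows "(\<lambda>x. v x $ i) \<in> borel_measurable N"
  using borel_measurable_continuous_on[OF _ assms, of "\<lambda>y. y $ i"]
  by (simp add: linear_continuous_on bounded_linear_vec_nth)

lemma measurable_transpose[measurable (raw)]:
  fixes A :: "'a \<Rightarrow> real^'n^'m"
  assumes "A \<in> borel_measurable N"
  shows "(\<lambda>x. transpose (A x)) \<in> borel_measurable N"
proof -
  have "continuous_on UNIV (\<lambda>A::real^'n^'m. transpose A)"
    unfolding transpose_def by (intro continuous_intros)
  then show ?thesis using borel_measurable_continuous_on[OF _ assms] by blast
qed

lemma deriv_measurable:
  fixes g :: "real^'d \<Rightarrow> real" and gg :: "real^'d \<Rightarrow> real^'d"
  assumes der: "\<And>y. (g has_derivative (\<lambda>h. gg y \<bullet> h)) (at y)"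
  shows "g \<in> borel_measurable borel" "gg \<in> borel_measurable borel"
proof -
  have cont: "continuous_on UNIV g"
    using der by (intro continuous_at_imp_continuous_on) (auto intro: has_derivative_continuous)
  then show "g \<in> borel_measurable borel" by (rule borel_measurable_continuous_onI)
  define q where "q m y = (\<chi> j. (g (y + (1 / real (Suc m)) *\<^sub>R axis j 1) - g y) / (1 / real (Suc m)))" for m y
  have qm: "q m \<in> borel_measurable borel" for m
  proof -
    have "continuous_on UNIV (q m)" unfolding q_def
      by (intro continuous_intros continuous_on_compose2[OF cont]) auto
    then show ?thesis by (rule borel_measurable_continuous_onI)
  qed
  have lim: "(\<lambda>m. q m y) \<longlonglongrightarrow> gg y" for y
  proof (rule vec_tendstoI)
    fix j
    define e :: "real^'d" where "e = axis j 1"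
    have "((\<lambda>t. g (y + t *\<^sub>R e)) has_derivative (\<lambda>t. gg y \<bullet> (t *\<^sub>R e))) (at 0)"
    proof -
      have "((\<lambda>t::real. y + t *\<^sub>R e) has_derivative (\<lambda>t. t *\<^sub>R e)) (at 0)"
        by (auto intro!: derivative_eq_intros)
      from has_derivative_compose[OF this der[of "y + 0 *\<^sub>R e"]] show ?thesis by simp
    qed
    then have "((\<lambda>t. g (y + t *\<^sub>R e)) has_field_derivative (gg y \<bullet> e)) (at 0)"
      unfolding has_field_derivative_def by (simp add: mult.commute[of _ "gg y \<bullet> e"])
    then have "((\<lambda>t. (g (y + t *\<^sub>R e) - g y) / t) \<longlongrightarrow> gg y \<bullet> e) (at 0)"
      unfolding has_field_derivative_iff by simp
    moreover have "(\<lambda>m. 1 / real (Suc m)) \<longlonglongrightarrow> 0" by (rule LIMSEQ_Suc[OF lim_const_over_n])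
    moreover have "\<forall>m. 1 / real (Suc m) \<noteq> 0" by simp
    ultimately have "(\<lambda>m. (g (y + (1 / real (Suc m)) *\<^sub>R e) - g y) / (1 / real (Suc m))) \<longlonglongrightarrow> gg y \<bullet> e"
      using LIMSEQ_SEQ_conv[THEN iffD2] by (rule_tac LIMSEQ_SEQ_conv[THEN iffD2, rule_format]) auto
    then show "(\<lambda>m. q m y $ j) \<longlonglongrightarrow> gg y $ j" unfolding q_def e_def by (simp add: inner_axis)
  qed
  show "gg \<in> borel_measurable borel"
    by (rule borel_measurable_LIMSEQ_metric[OF qm lim])
qed


lemma iter_cong:
  assumes "\<And>i j. i < n \<Longrightarrow> j < k \<Longrightarrow> T i j \<omega> = T' i j \<omega>'"
  shows "iter n gf T D x0 k \<omega> = iter n gf T' D x0 k \<omega>'"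
  using assms by (induction k) auto

lemma entry_meas:
  assumes "i \<in> I"
  shows "(\<lambda>\<phi>. \<phi> i $ p $ q) \<in> borel_measurable (PiM I (\<lambda>_. borel :: (real^'n^'m) measure))"
proof -
  have "(\<lambda>\<phi>. \<phi> i) \<in> borel_measurable (PiM I (\<lambda>_. borel :: (real^'n^'m) measure))"
    using measurable_component_singleton[OF assms, of "\<lambda>_. borel"] by simp
  then have "(\<lambda>\<phi>. \<phi> i $ p) \<in> borel_measurable (PiM I (\<lambda>_. borel :: (real^'n^'m) measure))"
    by (rule measurable_vec_nth[where v="\<lambda>\<phi>. \<phi> i"])
  then show ?thesis by (rule measurable_vec_nth[where v="\<lambda>\<phi>. \<phi> i $ p"])
qed

locale thm4p = prob_space M for M :: "'a measure" +
  fixes n :: nat and fs :: "nat \<Rightarrow> real^'d \<Rightarrow> real" and gf :: "nat \<Rightarrow> real^'d \<Rightarrow> real^'d"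
    and T :: "nat \<Rightarrow> nat \<Rightarrow> 'a \<Rightarrow> real^'d^'d" and D :: "real^'d^'d" and x0 :: "real^'d"
  assumes grad_i: "\<And>i y. i < n \<Longrightarrow> (fs i has_derivative (\<lambda>h. gf i y \<bullet> h)) (at y)"
    and T_meas: "\<And>i k. i < n \<Longrightarrow> T i k \<in> borel_measurable M"
    and T_indep: "indep_vars (\<lambda>_. borel) (\<lambda>(i, k). T i k) ({..<n} \<times> UNIV)"
begin

definition "xs = iter n gf T D x0"
definition "Fk k \<phi> = iter n gf (\<lambda>i j (_::unit). \<phi> (i, j)) D x0 k ()"
definition "Kset k = {..<n} \<times> {..<k}"
definition "Lset k = {..<n} \<times> {k}"
definition "blk A \<omega> = restrict (\<lambda>p. T (fst p) (snd p) \<omega>) A"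

lemma gf_meas[measurable]: "i < n \<Longrightarrow> gf i \<in> borel_measurable borel"
  using deriv_measurable(2)[OF grad_i] by blast

lemma fs_meas[measurable]: "i < n \<Longrightarrow> fs i \<in> borel_measurable borel"
  using deriv_measurable(1)[OF grad_i] by blast

lemma x_eq: "xs k \<omega> = Fk k (blk (Kset k) \<omega>)"
  unfolding xs_def Fk_def blk_def Kset_def by (rule iter_cong) auto

lemma Fk_meas: "k \<le> m \<Longrightarrow> Fk k \<in> borel_measurable (PiM (Kset m) (\<lambda>_. borel))"
proof (induction k)
  case 0
  then show ?case by (simp add: Fk_def)
next
  case (Suc k)
  then have IH: "Fk k \<in> borel_measurable (PiM (Kset m) (\<lambda>_. borel))" by simp
  have comp: "(\<lambda>\<phi>. \<phi> (i, k)) \<in> borel_measurable (PiM (Kset m) (\<lambda>_. borel))" if "i < n" for i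
    using Suc.prems that by (intro measurable_component_singleton) (auto simp: Kset_def)
  have gfm: "(\<lambda>\<phi>. gf i (Fk k \<phi>)) \<in> borel_measurable (PiM (Kset m) (\<lambda>_. borel))" if "i < n" for i
    using measurable_compose[OF IH gf_meas[OF that]] by simp
  have eq: "Fk (Suc k) = (\<lambda>\<phi>. Fk k \<phi> - (1 / real n) *\<^sub>R (\<Sum>i<n. \<phi> (i, k) *v (D *v gf i (Fk k \<phi>))))"
    by (simp add: Fk_def fun_eq_iff)
  show ?case unfolding eq
    by (intro borel_measurable_diff IH borel_measurable_scaleR borel_measurable_const borel_measurable_sum
        measurable_mv comp gfm) auto
qed

lemma blk_meas: assumes "A \<subseteq> {..<n} \<times> UNIV" shows "blk A \<in> measurable M (PiM A (\<lambda>_. borel))"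
  unfolding blk_def
proof (intro measurable_restrict)
  fix p assume "p \<in> A"
  then have "fst p < n" using assms by auto
  then show "(\<lambda>\<omega>. T (fst p) (snd p) \<omega>) \<in> borel_measurable M" using T_meas by simp
qed

lemma x_meas[measurable]: "xs k \<in> borel_measurable M"
proof -
  have "(\<lambda>\<omega>. Fk k (blk (Kset k) \<omega>)) \<in> borel_measurable M"
    by (rule measurable_compose[OF blk_meas Fk_meas]) (auto simp: Kset_def)
  then show ?thesis by (simp add: x_eq[abs_def])
qed

lemma indep_blocks:
  assumes "A \<inter> B = {}" "A \<subseteq> {..<n} \<times> UNIV" "B \<subseteq> {..<n} \<times> UNIV"
  shows "indep_var (PiM A (\<lambda>_. borel)) (blk A) (PiM B (\<lambda>_. borel)) (blk B)"
proof -
  have "indep_vars (\<lambda>j. PiM (case_bool A B j) (\<lambda>_. borel))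
      (\<lambda>j \<omega>. restrict (\<lambda>i. (\<lambda>(i, k). T i k) i \<omega>) (case_bool A B j)) UNIV"
    by (rule indep_vars_restrict[OF T_indep]) (use assms in \<open>auto simp: disjoint_family_on_def split: bool.split\<close>)
  moreover have e1: "(\<lambda>j. PiM (case_bool A B j) (\<lambda>_. borel)) = case_bool (PiM A (\<lambda>_. borel)) (PiM B (\<lambda>_. borel))"
    by (rule ext) (simp split: bool.split)
  moreover have e2: "(\<lambda>j \<omega>. restrict (\<lambda>i. (\<lambda>(i, k). T i k) i \<omega>) (case_bool A B j)) = case_bool (blk A) (blk B)"
    by (rule ext, rule ext) (simp add: blk_def case_prod_beta split: bool.split)
  ultimately show ?thesis unfolding indep_var_def by metis
qed

lemma indep_xPsi:
  assumes [measurable]: "\<phi> \<in> borel_measurable borel" and [measurable]: "\<psi> \<in> borel_measurable (PiM (Lset k) (\<lambda>_. borel))"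
  shows "indep_var borel (\<lambda>\<omega>. \<phi> (xs k \<omega>)) borel (\<lambda>\<omega>. \<psi> (blk (Lset k) \<omega>))"
proof -
  have "indep_var (PiM (Kset k) (\<lambda>_. borel)) (blk (Kset k)) (PiM (Lset k) (\<lambda>_. borel)) (blk (Lset k))"
    by (rule indep_blocks) (auto simp: Kset_def Lset_def)
  moreover have "(\<lambda>p. \<phi> (Fk k p)) \<in> borel_measurable (PiM (Kset k) (\<lambda>_. borel))"
    using measurable_compose[OF Fk_meas[of k k] assms(1)] by simp
  ultimately have "indep_var borel ((\<lambda>p. \<phi> (Fk k p)) \<circ> blk (Kset k)) borel (\<psi> \<circ> blk (Lset k))"
    by (rule indep_var_compose) (rule assms(2))
  then show ?thesis by (simp add: o_def x_eq)
qed

lemma indep_TT: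
  assumes "i < n" "j < n" "i \<noteq> j"
  shows "indep_var borel (\<lambda>\<omega>. T i k \<omega> $ p $ q) borel (\<lambda>\<omega>. T j k \<omega> $ r $ s)"
proof -
  have "indep_var (PiM {(i,k)} (\<lambda>_. borel)) (blk {(i,k)}) (PiM {(j,k)} (\<lambda>_. borel)) (blk {(j,k)})"
    by (rule indep_blocks) (use assms in auto)
  moreover have "(\<lambda>\<phi>. \<phi> (i,k) $ p $ q) \<in> borel_measurable (PiM {(i,k)} (\<lambda>_. borel :: (real^'d^'d) measure))"
    by (rule entry_meas) auto
  moreover have "(\<lambda>\<phi>. \<phi> (j,k) $ r $ s) \<in> borel_measurable (PiM {(j,k)} (\<lambda>_. borel :: (real^'d^'d) measure))"
    by (rule entry_meas) auto
  ultimately have "indep_var borel ((\<lambda>\<phi>. \<phi> (i,k) $ p $ q) \<circ> blk {(i,k)}) borel ((\<lambda>\<phi>. \<phi> (j,k) $ r $ s) \<circ> blk {(j,k)})"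
    by (rule indep_var_compose)
  then show ?thesis by (simp add: o_def blk_def)
qed

end


lemma matrix_add_rdistrib': "((A::real^'n^'m) + B) ** C = A ** C + B ** C"
  by (vector matrix_matrix_mult_def sum.distrib[symmetric] field_simps)

lemma bl_mm: "bounded_linear (\<lambda>A::real^'n^'n. B ** A ** C)"
proof -
  have "linear (\<lambda>A::real^'n^'n. B ** A ** C)"
    by (rule linearI) (simp_all add: matrix_add_ldistrib matrix_add_rdistrib' matrix_scalar_ac scalar_matrix_assoc)
  then show ?thesis by (simp add: linear_conv_bounded_linear)
qed

lemma bl_entry: "bounded_linear (\<lambda>A::real^'n^'m. A $ p $ q)"
  using bounded_linear_compose[OF bounded_linear_vec_nth[of q] bounded_linear_vec_nth[of p]] by (simp add: o_def)

lemma bl_transpose: "bounded_linear (\<lambda>A::real^'n^'n. transpose A)"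
proof -
  have "linear (\<lambda>A::real^'n^'n. transpose A)"
    by (rule linearI) (simp_all add: transpose_def vec_eq_iff)
  then show ?thesis by (simp add: linear_conv_bounded_linear)
qed

lemma bl_quad: "bounded_linear (\<lambda>A::real^'n^'n. h \<bullet> (A *v h))"
proof -
  have "linear (\<lambda>A::real^'n^'n. h \<bullet> (A *v h))"
    by (rule linearI) (simp_all add: matrix_vector_mult_add_rdistrib inner_add_right scaleR_matrix_vector_assoc[symmetric])
  then show ?thesis by (simp add: linear_conv_bounded_linear)
qed

lemma (in prob_space) integral_entry:
  fixes F :: "'a \<Rightarrow> real^'n^'m"
  assumes "integrable M F"
  shows "(\<integral>\<omega>. F \<omega> \<partial>M) $ p $ q = (\<integral>\<omega>. F \<omega> $ p $ q \<partial>M)"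
  using integral_bounded_linear[OF bl_entry assms] by simp

lemma inner_mv: "a \<bullet> (X *v b) = (\<Sum>p\<in>UNIV. \<Sum>q\<in>UNIV. (a $ p * b $ q) * X $ p $ q)"
  unfolding inner_vec_def matrix_vector_mult_def
  by (simp add: sum_distrib_left) (intro sum.cong refl, simp add: mult_ac)

context thm4p
begin

lemma bilin:
  fixes u v :: "real^'d \<Rightarrow> real^'d" and \<Xi> :: "(nat \<times> nat \<Rightarrow> real^'d^'d) \<Rightarrow> real^'d^'d"
  assumes um[measurable]: "u \<in> borel_measurable borel" and vm[measurable]: "v \<in> borel_measurable borel"
    and uv: "\<And>p q. integrable M (\<lambda>\<omega>. u (xs k \<omega>) $ p * v (xs k \<omega>) $ q)"
    and Xm[measurable]: "\<Xi> \<in> borel_measurable (PiM (Lset k) (\<lambda>_. borel))"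
    and Xi: "\<And>p q. integrable M (\<lambda>\<omega>. \<Xi> (blk (Lset k) \<omega>) $ p $ q)"
  shows "integrable M (\<lambda>\<omega>. u (xs k \<omega>) \<bullet> (\<Xi> (blk (Lset k) \<omega>) *v v (xs k \<omega>)))"
    and "(\<integral>\<omega>. u (xs k \<omega>) \<bullet> (\<Xi> (blk (Lset k) \<omega>) *v v (xs k \<omega>)) \<partial>M)
       = (\<integral>\<omega>. u (xs k \<omega>) \<bullet> ((\<chi> p q. \<integral>\<omega>'. \<Xi> (blk (Lset k) \<omega>') $ p $ q \<partial>M) *v v (xs k \<omega>)) \<partial>M)"
proof -
  let ?E = "(\<chi> p q. \<integral>\<omega>'. \<Xi> (blk (Lset k) \<omega>') $ p $ q \<partial>M)"
  have ind: "indep_var borel (\<lambda>\<omega>. u (xs k \<omega>) $ p * v (xs k \<omega>) $ q) borel (\<lambda>\<omega>. \<Xi> (blk (Lset k) \<omega>) $ p $ q)" for p q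
  proof -
    have m1: "(\<lambda>y. u y $ p * v y $ q) \<in> borel_measurable borel" using borel_measurable_times[OF measurable_vec_nth[OF um] measurable_vec_nth[OF vm]] .
    have m2: "(\<lambda>\<phi>. \<Xi> \<phi> $ p $ q) \<in> borel_measurable (PiM (Lset k) (\<lambda>_. borel))"
      by (rule measurable_vec_nth[where v="\<lambda>\<phi>. \<Xi> \<phi> $ p"], rule measurable_vec_nth[where v="\<Xi>"]) (rule Xm)
    show ?thesis using indep_xPsi[OF m1 m2] by simp
  qed
  have int_t: "integrable M (\<lambda>\<omega>. (u (xs k \<omega>) $ p * v (xs k \<omega>) $ q) * \<Xi> (blk (Lset k) \<omega>) $ p $ q)" for p q
    by (rule indep_var_integrable[OF ind uv Xi])
  have eq_t: "(\<integral>\<omega>. (u (xs k \<omega>) $ p * v (xs k \<omega>) $ q) * \<Xi> (blk (Lset k) \<omega>) $ p $ q \<partial>M)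
      = (\<integral>\<omega>. (u (xs k \<omega>) $ p * v (xs k \<omega>) $ q) * ?E $ p $ q \<partial>M)" for p q
    using indep_var_lebesgue_integral[OF ind uv Xi] by simp
  show "integrable M (\<lambda>\<omega>. u (xs k \<omega>) \<bullet> (\<Xi> (blk (Lset k) \<omega>) *v v (xs k \<omega>)))"
    unfolding inner_mv by (intro Bochner_Integration.integrable_sum int_t)
  have "(\<integral>\<omega>. u (xs k \<omega>) \<bullet> (\<Xi> (blk (Lset k) \<omega>) *v v (xs k \<omega>)) \<partial>M)
     = (\<Sum>p\<in>UNIV. \<Sum>q\<in>UNIV. (\<integral>\<omega>. (u (xs k \<omega>) $ p * v (xs k \<omega>) $ q) * \<Xi> (blk (Lset k) \<omega>) $ p $ q \<partial>M))"
    unfolding inner_mv using int_t by (simp add: Bochner_Integration.integral_sum)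
  also have "\<dots> = (\<Sum>p\<in>UNIV. \<Sum>q\<in>UNIV. (\<integral>\<omega>. (u (xs k \<omega>) $ p * v (xs k \<omega>) $ q) * ?E $ p $ q \<partial>M))"
    using eq_t by simp
  also have "\<dots> = (\<integral>\<omega>. u (xs k \<omega>) \<bullet> (?E *v v (xs k \<omega>)) \<partial>M)"
    unfolding inner_mv using uv by (simp add: Bochner_Integration.integral_sum)
  finally show "(\<integral>\<omega>. u (xs k \<omega>) \<bullet> (\<Xi> (blk (Lset k) \<omega>) *v v (xs k \<omega>)) \<partial>M)
       = (\<integral>\<omega>. u (xs k \<omega>) \<bullet> (?E *v v (xs k \<omega>)) \<partial>M)" .
qed

end


fun Vs :: "real \<Rightarrow> nat \<Rightarrow> real" where
  "Vs \<rho> 0 = 0" | "Vs \<rho> (Suc N) = \<rho> * Vs \<rho> N + 1"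

lemma Vs_ge: "\<rho> \<ge> 1 \<Longrightarrow> Vs \<rho> N \<ge> real N"
proof (induction N)
  case (Suc N)
  have "Vs \<rho> N \<ge> 0" using Suc by linarith
  then have "\<rho> * Vs \<rho> N \<ge> Vs \<rho> N" using Suc.prems by (simp add: mult_le_cancel_right1)
  then show ?case using Suc by simp
qed simp

lemma telescope:
  fixes \<delta> r :: "nat \<Rightarrow> real"
  assumes a: "a \<ge> 0" and c: "c > 0" and d0: "\<And>k. \<delta> k \<ge> 0"
    and rec: "\<And>k. \<delta> (Suc k) \<le> (1 + a) * \<delta> k - (c / 2) * r k + b" and K: "K \<ge> 1"
  shows "Min (r ` {..<K}) \<le> 2 * (1 + a) ^ K * \<delta> 0 / (c * real K) + 2 * b / c"
proof -
  define m where "m = Min (r ` {..<K})"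
  define \<rho> where "\<rho> = 1 + a"
  have \<rho>: "\<rho> \<ge> 1" using a by (simp add: \<rho>_def)
  have mr: "m \<le> r k" if "k < K" for k unfolding m_def using that by (intro Min_le) auto
  have main: "N \<le> K \<Longrightarrow> (c / 2) * m * Vs \<rho> N \<le> \<rho> ^ N * \<delta> 0 - \<delta> N + b * Vs \<rho> N" for N
  proof (induction N)
    case 0 then show ?case by simp
  next
    case (Suc N)
    then have IH: "(c / 2) * m * Vs \<rho> N \<le> \<rho> ^ N * \<delta> 0 - \<delta> N + b * Vs \<rho> N" by simp
    have "\<rho> * ((c / 2) * m * Vs \<rho> N) \<le> \<rho> * (\<rho> ^ N * \<delta> 0 - \<delta> N + b * Vs \<rho> N)"
      using IH \<rho> by (intro mult_left_mono) auto
    moreover have "(c / 2) * m \<le> (c / 2) * r N" using mr[of N] Suc.prems c by simp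
    moreover have "\<delta> (Suc N) \<le> \<rho> * \<delta> N - (c / 2) * r N + b" using rec[of N] by (simp add: \<rho>_def)
    ultimately show ?case by (simp add: algebra_simps add_divide_distrib; linarith)
  qed
  have VK: "Vs \<rho> K \<ge> real K" using Vs_ge[OF \<rho>] .
  have Kpos: "real K > 0" using K by simp
  have Vpos: "Vs \<rho> K > 0" using VK Kpos by linarith
  have "(c / 2) * m * Vs \<rho> K \<le> \<rho> ^ K * \<delta> 0 + b * Vs \<rho> K" using main[of K] d0[of K] by simp
  then have "m \<le> (\<rho> ^ K * \<delta> 0 + b * Vs \<rho> K) / ((c / 2) * Vs \<rho> K)"
    using c Vpos by (simp add: le_divide_eq mult.commute mult.left_commute)
  also have "\<dots> = 2 * (\<rho> ^ K * \<delta> 0) / (c * Vs \<rho> K) + 2 * b / c"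
    using c Vpos by (simp add: field_simps)
  also have "2 * (\<rho> ^ K * \<delta> 0) / (c * Vs \<rho> K) \<le> 2 * (\<rho> ^ K * \<delta> 0) / (c * real K)"
  proof -
    have "0 \<le> 2 * (\<rho> ^ K * \<delta> 0)" using \<rho> d0[of 0] by simp
    moreover have "c * real K \<le> c * Vs \<rho> K" using VK c by simp
    moreover have "0 < c * real K" using c Kpos by simp
    ultimately show ?thesis by (intro divide_left_mono) auto
  qed
  finally show ?thesis unfolding m_def \<rho>_def by (simp add: mult.assoc)
qed


lemma sym_inner_T:
  fixes A :: "real^'n^'n"
  shows "(A *v x) \<bullet> y = x \<bullet> (transpose A *v y)"
  by (metis dot_lmul_matrix inner_commute transpose_matrix_vector)

lemma prod_bound:
  fixes a b :: "real^'n"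
  shows "\<bar>a $ p * b $ q\<bar> \<le> (norm a)^2 + (norm b)^2"
proof -
  have "\<bar>a $ p * b $ q\<bar> \<le> norm a * norm b"
    unfolding abs_mult by (intro mult_mono component_le_norm_cart) auto
  also have "\<dots> \<le> (norm a)^2 + (norm b)^2"
  proof -
    have "0 \<le> (norm a - norm b)^2" by simp
    moreover have "(norm a - norm b)^2 = (norm a)^2 - 2 * (norm a * norm b) + (norm b)^2"
      by (simp add: power2_diff)
    moreover have "0 \<le> norm a * norm b" by simp
    ultimately show ?thesis by linarith
  qed
  finally show ?thesis .
qed

context prob_space
begin

definition "sqint a \<longleftrightarrow> a \<in> borel_measurable M \<and> integrable M (\<lambda>\<omega>. (norm (a \<omega>))^2)"

lemma sqint_prod:
  fixes a b :: "'a \<Rightarrow> real^'n"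
  assumes "sqint a" "sqint b"
  shows "integrable M (\<lambda>\<omega>. a \<omega> $ p * b \<omega> $ q)"
proof (rule Bochner_Integration.integrable_bound)
  show "integrable M (\<lambda>\<omega>. (norm (a \<omega>))^2 + (norm (b \<omega>))^2)" using assms by (simp add: sqint_def)
  show "(\<lambda>\<omega>. a \<omega> $ p * b \<omega> $ q) \<in> borel_measurable M"
    using assms unfolding sqint_def by (intro borel_measurable_times measurable_vec_nth) auto
  show "AE \<omega> in M. norm (a \<omega> $ p * b \<omega> $ q) \<le> norm ((norm (a \<omega>))^2 + (norm (b \<omega>))^2)"
  proof (intro AE_I2)
    fix \<omega> show "norm (a \<omega> $ p * b \<omega> $ q) \<le> norm ((norm (a \<omega>))^2 + (norm (b \<omega>))^2)"
      using prod_bound[of "a \<omega>" p "b \<omega>" q] by simp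
  qed
qed

lemma sqint_mv:
  fixes a :: "'a \<Rightarrow> real^'n" and A :: "real^'n^'n"
  assumes "sqint a"
  shows "sqint (\<lambda>\<omega>. A *v a \<omega>)"
proof -
  obtain B where B: "B > 0" "\<And>h. norm (A *v h) \<le> B * norm h" using mat_bound by blast
  have m: "(\<lambda>\<omega>. A *v a \<omega>) \<in> borel_measurable M" using assms unfolding sqint_def
    by (intro measurable_mv) auto
  have "integrable M (\<lambda>\<omega>. (norm (A *v a \<omega>))^2)"
  proof (rule Bochner_Integration.integrable_bound)
    show "integrable M (\<lambda>\<omega>. B^2 * (norm (a \<omega>))^2)" using assms by (simp add: sqint_def)
    show "(\<lambda>\<omega>. (norm (A *v a \<omega>))^2) \<in> borel_measurable M" using m by measurable
    show "AE \<omega> in M. norm ((norm (A *v a \<omega>))^2) \<le> norm (B^2 * (norm (a \<omega>))^2)"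
    proof (intro AE_I2)
      fix \<omega>
      have "norm (A *v a \<omega>) \<le> B * norm (a \<omega>)" by (rule B(2))
      then have "(norm (A *v a \<omega>))^2 \<le> (B * norm (a \<omega>))^2" by (intro power_mono) auto
      then show "norm ((norm (A *v a \<omega>))^2) \<le> norm (B^2 * (norm (a \<omega>))^2)" by (simp add: power_mult_distrib)
    qed
  qed
  then show ?thesis using m by (simp add: sqint_def)
qed

end

locale thm4 = thm4p M n fs gf T D x0 for M :: "'a measure" and n :: nat
    and fs :: "nat \<Rightarrow> real^'d \<Rightarrow> real" and gf :: "nat \<Rightarrow> real^'d \<Rightarrow> real^'d"
    and T :: "nat \<Rightarrow> nat \<Rightarrow> 'a \<Rightarrow> real^'d^'d" and D :: "real^'d^'d" and x0 :: "real^'d" +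
  fixes finf_i :: "nat \<Rightarrow> real" and finf :: real and Ls :: "nat \<Rightarrow> real^'d^'d" and L :: "real^'d^'d"
    and Tdist :: "(real^'d^'d) measure"
  assumes n_pos: "n \<ge> 1"
    and lower_i: "\<And>i y. i < n \<Longrightarrow> finf_i i \<le> fs i y"
    and smooth_i: "\<And>i. i < n \<Longrightarrow> pd (Ls i) \<and> matrix_smooth (Ls i) (fs i) (gf i)"
    and lower: "\<And>y. finf \<le> (1 / real n) * (\<Sum>i<n. fs i y)"
    and L_psd: "psd L"
    and smooth: "matrix_smooth L (\<lambda>x. (1 / real n) * (\<Sum>i<n. fs i x)) (\<lambda>x. (1 / real n) *\<^sub>R (\<Sum>i<n. gf i x))"
    and T_dist: "\<And>i k. i < n \<Longrightarrow> distr M borel (T i k) = Tdist"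
    and T_psd: "\<And>i k. i < n \<Longrightarrow> AE \<omega> in M. psd (T i k \<omega>)"
    and T_int: "\<And>i k. i < n \<Longrightarrow> integrable M (T i k)"
    and T_mean: "\<And>i k. i < n \<Longrightarrow> integral\<^sup>L M (T i k) = mat 1"
    and lam_int: "\<And>i k. i < n \<Longrightarrow> integrable M (\<lambda>\<omega>.
               msqrt (Ls i) ** D ** (T i k \<omega> - mat 1) ** L ** (T i k \<omega> - mat 1) ** D ** msqrt (Ls i))"
    and fi_int: "\<And>i k. i < n \<Longrightarrow> integrable M (\<lambda>\<omega>. fs i (iter n gf T D x0 k \<omega>))"
    and D_pd: "pd D"
    and DLD: "loewner_le (D ** L ** D) D"
begin

lemma grad_bound:
  assumes i: "i < n"
  shows "\<exists>h. gf i y = msqrt (Ls i) *v h \<and> h \<bullet> h \<le> 2 * (fs i y - finf_i i)"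
proof -
  define S where "S = msqrt (Ls i)"
  have pd: "pd (Ls i)" and sm: "matrix_smooth (Ls i) (fs i) (gf i)" using smooth_i[OF i] by auto
  note Sp = msqrt_pd[OF pd, folded S_def]
  obtain h where h: "gf i y = S *v h" using Sp(4) by (metis surjD)
  obtain w where w: "h = S *v w" using Sp(4) by (metis surjD)
  have "fs i (y - w) \<le> fs i y + gf i y \<bullet> ((y - w) - y) + 1/2 * ((Ls i *v ((y - w) - y)) \<bullet> ((y - w) - y))"
    using sm unfolding matrix_smooth_def by blast
  moreover have "gf i y \<bullet> ((y - w) - y) = - (h \<bullet> h)"
    using sym_inner[OF Sp(3), of h w] h w by simp
  moreover have "(Ls i *v ((y - w) - y)) \<bullet> ((y - w) - y) = h \<bullet> h"
  proof -
    have "Ls i *v w = S *v h" using Sp(2) w by (simp add: matrix_vector_mul_assoc)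
    moreover have "(y - w) - y = (-1) *\<^sub>R w" by simp
    ultimately have "(Ls i *v ((y - w) - y)) \<bullet> ((y - w) - y) = (S *v h) \<bullet> w"
      by (simp only: matrix_vector_mult_scaleR) simp
    then show ?thesis using sym_inner[OF Sp(3), of h w] w by simp
  qed
  moreover have "finf_i i \<le> fs i (y - w)" by (rule lower_i[OF i])
  ultimately have "h \<bullet> h \<le> 2 * (fs i y - finf_i i)" by simp
  then show ?thesis using h S_def by blast
qed

lemma gsq: assumes i: "i < n" obtains C where "C \<ge> 0" "\<And>y. (norm (gf i y))^2 \<le> C * (fs i y - finf_i i)"
proof -
  obtain B where B: "B > 0" "\<And>h. norm (msqrt (Ls i) *v h) \<le> B * norm h" using mat_bound by blast
  have "(norm (gf i y))^2 \<le> (2 * B^2) * (fs i y - finf_i i)" for y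
  proof -
    obtain h where h: "gf i y = msqrt (Ls i) *v h" "h \<bullet> h \<le> 2 * (fs i y - finf_i i)" using grad_bound[OF i] by blast
    have "norm (gf i y) \<le> B * norm h" using B(2) h(1) by simp
    then have "(norm (gf i y))^2 \<le> (B * norm h)^2" by (intro power_mono) auto
    also have "\<dots> = B^2 * (h \<bullet> h)" by (simp add: power_mult_distrib power2_norm_eq_inner)
    also have "\<dots> \<le> B^2 * (2 * (fs i y - finf_i i))" using h(2) by (intro mult_left_mono) auto
    finally show ?thesis by (simp add: algebra_simps)
  qed
  then show ?thesis using that[of "2 * B^2"] by simp
qed

lemma sqint_g: assumes i: "i < n" shows "sqint (\<lambda>\<omega>. gf i (xs k \<omega>))"
proof -
  obtain C where C: "C \<ge> 0" "\<And>y. (norm (gf i y))^2 \<le> C * (fs i y - finf_i i)" using gsq[OF i] by blast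
  have m: "(\<lambda>\<omega>. gf i (xs k \<omega>)) \<in> borel_measurable M" using i by measurable
  have "integrable M (\<lambda>\<omega>. (norm (gf i (xs k \<omega>)))^2)"
  proof (rule Bochner_Integration.integrable_bound)
    show "integrable M (\<lambda>\<omega>. C * (fs i (xs k \<omega>) - finf_i i))"
      using fi_int[OF i, of k] by (simp add: xs_def)
    show "(\<lambda>\<omega>. (norm (gf i (xs k \<omega>)))^2) \<in> borel_measurable M" using m by measurable
    show "AE \<omega> in M. norm ((norm (gf i (xs k \<omega>)))^2) \<le> norm (C * (fs i (xs k \<omega>) - finf_i i))"
    proof (intro AE_I2)
      fix \<omega>
      have "0 \<le> C * (fs i (xs k \<omega>) - finf_i i)" using C(1) lower_i[OF i] by simp
      then show "norm ((norm (gf i (xs k \<omega>)))^2) \<le> norm (C * (fs i (xs k \<omega>) - finf_i i))" using C(2) by simp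
    qed
  qed
  then show ?thesis using m by (simp add: sqint_def)
qed

lemma int_uv:
  fixes A B :: "real^'d^'d"
  assumes "i < n" "j < n"
  shows "integrable M (\<lambda>\<omega>. (A *v gf i (xs k \<omega>)) $ p * (B *v gf j (xs k \<omega>)) $ q)"
  by (intro sqint_prod sqint_mv sqint_g assms)

end


lemma quad_ident:
  fixes t L :: "real^'n^'n"
  shows "(t - mat 1) ** L ** (t - mat 1) = t ** L ** t - t ** L - L ** t + L"
proof -
  have "((t - mat 1) ** L ** (t - mat 1)) *v x = (t ** L ** t - t ** L - L ** t + L) *v x" for x
    by (simp add: matrix_vector_mul_assoc[symmetric] matrix_vector_mult_diff_rdistrib
        matrix_vector_mult_add_rdistrib matrix_vector_mult_diff_distrib)
  then show ?thesis by (simp add: matrix_eq)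
qed

lemma surj_comp_mat:
  fixes A B :: "real^'n^'n"
  assumes "surj (\<lambda>x. A *v x)" "surj (\<lambda>x. B *v x)"
  shows "surj (\<lambda>x. (A ** B) *v x)"
proof -
  have "y \<in> range (\<lambda>x. (A ** B) *v x)" for y
  proof -
    obtain z where "A *v z = y" using assms(1) by (metis surjD)
    moreover obtain x where "B *v x = z" using assms(2) by (metis surjD)
    ultimately show ?thesis by (metis matrix_vector_mul_assoc rangeI)
  qed
  then show ?thesis by blast
qed

lemma left_inv:
  fixes A :: "real^'n^'n"
  assumes "surj (\<lambda>x. A *v x)"
  obtains P where "P ** A = mat 1"
  using assms matrix_right_invertible_surjective matrix_left_right_inverse by metis

lemma right_inv:
  fixes A :: "real^'n^'n"
  assumes "surj (\<lambda>x. A *v x)"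
  obtains Q where "A ** Q = mat 1"
  using assms matrix_right_invertible_surjective by metis

context thm4
begin

definition "Zbar = integral\<^sup>L Tdist (\<lambda>t. (t - mat 1) ** L ** (t - mat 1))"

lemma T_sym: "i < n \<Longrightarrow> AE \<omega> in M. transpose (T i k \<omega>) = T i k \<omega>"
  using T_psd[of i k] by (auto simp: psd_def sym_mat_def)

lemma Z_int:
  assumes i: "i < n"
  shows "integrable M (\<lambda>\<omega>. (T i k \<omega> - mat 1) ** L ** (T i k \<omega> - mat 1))"
proof -
  define S where "S = msqrt (Ls i)"
  have pd: "pd (Ls i)" using smooth_i[OF i] by auto
  note Sp = msqrt_pd[OF pd, folded S_def]
  have sD: "surj (\<lambda>x. D *v x)" by (rule pd_surj[OF D_pd])
  obtain P where P: "P ** (S ** D) = mat 1" using left_inv[OF surj_comp_mat[OF Sp(4) sD]] by blast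
  obtain Q where Q: "(D ** S) ** Q = mat 1" using right_inv[OF surj_comp_mat[OF sD Sp(4)]] by blast
  have eq: "P ** (S ** D ** Z ** D ** S) ** Q = Z" for Z :: "real^'d^'d"
  proof -
    have "P ** (S ** D ** Z ** D ** S) ** Q = (P ** (S ** D)) ** Z ** ((D ** S) ** Q)"
      by (simp add: matrix_mul_assoc)
    then show ?thesis using P Q by simp
  qed
  have "integrable M (\<lambda>\<omega>. P ** (S ** D ** (T i k \<omega> - mat 1) ** L ** (T i k \<omega> - mat 1) ** D ** S) ** Q)"
    using integrable_bounded_linear[OF bl_mm lam_int[OF i, of k, folded S_def]] .
  moreover have "(\<lambda>\<omega>. P ** (S ** D ** (T i k \<omega> - mat 1) ** L ** (T i k \<omega> - mat 1) ** D ** S) ** Q)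
      = (\<lambda>\<omega>. (T i k \<omega> - mat 1) ** L ** (T i k \<omega> - mat 1))"
  proof (rule ext)
    fix \<omega>
    show "P ** (S ** D ** (T i k \<omega> - mat 1) ** L ** (T i k \<omega> - mat 1) ** D ** S) ** Q = (T i k \<omega> - mat 1) ** L ** (T i k \<omega> - mat 1)"
      using eq[of "(T i k \<omega> - mat 1) ** L ** (T i k \<omega> - mat 1)"] by (simp only: matrix_mul_assoc)
  qed
  ultimately show ?thesis by simp
qed

lemma T_borel: "i < n \<Longrightarrow> T i k \<in> measurable M borel"
  using T_meas by simp

lemma dist_integral:
  fixes h :: "real^'d^'d \<Rightarrow> real^'d^'d"
  assumes i: "i < n" and h: "h \<in> borel_measurable borel"
  shows "(\<integral>\<omega>. h (T i k \<omega>) \<partial>M) = integral\<^sup>L Tdist h"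
  using integral_distr[OF T_borel[OF i] h] T_dist[OF i] by simp

lemma Z_mean: "i < n \<Longrightarrow> (\<integral>\<omega>. (T i k \<omega> - mat 1) ** L ** (T i k \<omega> - mat 1) \<partial>M) = Zbar"
  unfolding Zbar_def by (rule dist_integral) (auto intro!: measurable_mm borel_measurable_diff)

lemma X3:
  assumes i: "i < n"
  shows "integrable M (\<lambda>\<omega>. transpose (T i k \<omega>) ** L ** T i k \<omega>)"
    and "(\<integral>\<omega>. transpose (T i k \<omega>) ** L ** T i k \<omega> \<partial>M) = L + Zbar"
proof -
  let ?Z = "\<lambda>\<omega>. (T i k \<omega> - mat 1) ** L ** (T i k \<omega> - mat 1)"
  let ?R = "\<lambda>\<omega>. ?Z \<omega> + mat 1 ** T i k \<omega> ** L + L ** T i k \<omega> ** mat 1 - L"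
  have ae: "AE \<omega> in M. transpose (T i k \<omega>) ** L ** T i k \<omega> = ?R \<omega>"
    using T_sym[where k=k, OF i] by eventually_elim (simp add: quad_ident)
  have iZ: "integrable M ?Z" by (rule Z_int[OF i])
  have i1: "integrable M (\<lambda>\<omega>. mat 1 ** T i k \<omega> ** L)"
    by (rule integrable_bounded_linear[OF bl_mm T_int[OF i]])
  have i2: "integrable M (\<lambda>\<omega>. L ** T i k \<omega> ** mat 1)"
    by (rule integrable_bounded_linear[OF bl_mm T_int[OF i]])
  have iR: "integrable M ?R" using iZ i1 i2 by simp
  have mX: "(\<lambda>\<omega>. transpose (T i k \<omega>) ** L ** T i k \<omega>) \<in> borel_measurable M"
    using T_meas[OF i] by (intro measurable_mm measurable_transpose borel_measurable_const) auto
  show "integrable M (\<lambda>\<omega>. transpose (T i k \<omega>) ** L ** T i k \<omega>)"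
    using integrable_cong_AE_imp[OF iR mX] ae by (simp add: eq_commute)
  have "(\<integral>\<omega>. transpose (T i k \<omega>) ** L ** T i k \<omega> \<partial>M) = (\<integral>\<omega>. ?R \<omega> \<partial>M)"
    using mX iR ae by (intro integral_cong_AE) auto
  also have "\<dots> = Zbar + mat 1 ** (\<integral>\<omega>. T i k \<omega> \<partial>M) ** L + L ** (\<integral>\<omega>. T i k \<omega> \<partial>M) ** mat 1 - L"
    using iZ i1 i2 Z_mean[OF i, of k] prob_space
    integral_bounded_linear[OF bl_mm[of "mat 1" L] T_int[OF i, of k]]
    integral_bounded_linear[OF bl_mm[of L "mat 1"] T_int[OF i, of k]]
    by simp
  also have "\<dots> = L + Zbar" using T_mean[OF i] by simp
  finally show "(\<integral>\<omega>. transpose (T i k \<omega>) ** L ** T i k \<omega> \<partial>M) = L + Zbar" .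
qed

end


lemma entry_tLt:
  fixes A B L :: "real^'n^'n"
  shows "(transpose A ** L ** B) $ p $ s = (\<Sum>r\<in>UNIV. \<Sum>q\<in>UNIV. L $ q $ r * (A $ q $ p * B $ r $ s))"
  by (simp add: matrix_matrix_mult_def transpose_def sum_distrib_right sum_distrib_left mult_ac)

context thm4
begin

lemma blk_ik: "i < n \<Longrightarrow> blk (Lset k) \<omega> (i, k) = T i k \<omega>"
  by (simp add: blk_def Lset_def)

lemma meas_ik: "i < n \<Longrightarrow> (\<lambda>\<phi>. \<phi> (i, k)) \<in> borel_measurable (PiM (Lset k) (\<lambda>_. borel :: (real^'d^'d) measure))"
  using measurable_component_singleton[of "(i,k)" "Lset k" "\<lambda>_. borel :: (real^'d^'d) measure"]
  by (simp add: Lset_def)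

lemma EA:
  assumes i: "i < n" and j: "j < n"
  shows "integrable M (\<lambda>\<omega>. gf j (xs k \<omega>) \<bullet> (T i k \<omega> *v (D *v gf i (xs k \<omega>))))"
    and "(\<integral>\<omega>. gf j (xs k \<omega>) \<bullet> (T i k \<omega> *v (D *v gf i (xs k \<omega>))) \<partial>M)
       = (\<integral>\<omega>. gf j (xs k \<omega>) \<bullet> (D *v gf i (xs k \<omega>)) \<partial>M)"
proof -
  have uv: "integrable M (\<lambda>\<omega>. gf j (xs k \<omega>) $ p * (D *v gf i (xs k \<omega>)) $ q)" for p q
    using int_uv[OF j i, of "mat 1" k p D q] by simp
  have Xi: "integrable M (\<lambda>\<omega>. blk (Lset k) \<omega> (i, k) $ p $ q)" for p q
    using integrable_bounded_linear[OF bl_entry T_int[OF i, of k]] blk_ik[OF i] by simp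
  have gm: "gf j \<in> borel_measurable borel" "(\<lambda>y. D *v gf i y) \<in> borel_measurable borel"
    using i j by (auto intro!: measurable_mv)
  note B = bilin[OF gm uv meas_ik[OF i] Xi]
  have E: "(\<chi> p q. \<integral>\<omega>'. blk (Lset k) \<omega>' (i, k) $ p $ q \<partial>M) = mat 1"
  proof -
    have "(\<integral>\<omega>'. blk (Lset k) \<omega>' (i, k) $ p $ q \<partial>M) = mat 1 $ p $ q" for p q
      using integral_entry[OF T_int[OF i, of k], of p q] T_mean[OF i, of k] blk_ik[OF i] by simp
    then show ?thesis by (simp add: vec_eq_iff)
  qed
  show "integrable M (\<lambda>\<omega>. gf j (xs k \<omega>) \<bullet> (T i k \<omega> *v (D *v gf i (xs k \<omega>))))"
    using B(1) blk_ik[OF i] by simp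
  show "(\<integral>\<omega>. gf j (xs k \<omega>) \<bullet> (T i k \<omega> *v (D *v gf i (xs k \<omega>))) \<partial>M)
       = (\<integral>\<omega>. gf j (xs k \<omega>) \<bullet> (D *v gf i (xs k \<omega>)) \<partial>M)"
    using B(2) E blk_ik[OF i] by simp
qed

lemma EB:
  assumes i: "i < n" and j: "j < n" and ij: "i \<noteq> j"
  shows "integrable M (\<lambda>\<omega>. (D *v gf i (xs k \<omega>)) \<bullet> ((transpose (T i k \<omega>) ** L ** T j k \<omega>) *v (D *v gf j (xs k \<omega>))))"
    and "(\<integral>\<omega>. (D *v gf i (xs k \<omega>)) \<bullet> ((transpose (T i k \<omega>) ** L ** T j k \<omega>) *v (D *v gf j (xs k \<omega>))) \<partial>M)
       = (\<integral>\<omega>. (D *v gf i (xs k \<omega>)) \<bullet> (L *v (D *v gf j (xs k \<omega>))) \<partial>M)"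
proof -
  let ?X = "\<lambda>\<phi> :: nat \<times> nat \<Rightarrow> real^'d^'d. transpose (\<phi> (i, k)) ** L ** \<phi> (j, k)"
  have uv: "integrable M (\<lambda>\<omega>. (D *v gf i (xs k \<omega>)) $ p * (D *v gf j (xs k \<omega>)) $ q)" for p q
    by (rule int_uv[OF i j])
  have ind: "indep_var borel (\<lambda>\<omega>. T i k \<omega> $ q $ p) borel (\<lambda>\<omega>. T j k \<omega> $ r $ s)" for p q r s
    by (rule indep_TT[OF i j ij])
  have ie: "integrable M (\<lambda>\<omega>. T i k \<omega> $ p $ q)" if "i < n" for i p q
    using integrable_bounded_linear[OF bl_entry T_int[OF that, of k]] by simp
  have me: "(\<integral>\<omega>. T i k \<omega> $ p $ q \<partial>M) = mat 1 $ p $ q" if "i < n" for i p q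
    using integral_entry[OF T_int[OF that, of k], of p q] T_mean[OF that, of k] by simp
  have Xi: "integrable M (\<lambda>\<omega>. ?X (blk (Lset k) \<omega>) $ p $ s)" for p s
    unfolding blk_ik[OF i] blk_ik[OF j] entry_tLt
    by (intro Bochner_Integration.integrable_sum integrable_mult_right indep_var_integrable[OF ind ie[OF i] ie[OF j]])
  have Xm: "?X \<in> borel_measurable (PiM (Lset k) (\<lambda>_. borel))"
    using meas_ik[OF i, of k] meas_ik[OF j, of k] by (intro measurable_mm measurable_transpose borel_measurable_const) auto
  have gm: "(\<lambda>y. D *v gf i y) \<in> borel_measurable borel" "(\<lambda>y. D *v gf j y) \<in> borel_measurable borel"
    using i j by (auto intro!: measurable_mv)
  note B = bilin[OF gm uv Xm Xi]
  have E: "(\<chi> p s. \<integral>\<omega>'. ?X (blk (Lset k) \<omega>') $ p $ s \<partial>M) = L"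
  proof -
    have "(\<integral>\<omega>'. ?X (blk (Lset k) \<omega>') $ p $ s \<partial>M) = L $ p $ s" for p s
    proof -
      have "(\<integral>\<omega>'. ?X (blk (Lset k) \<omega>') $ p $ s \<partial>M)
          = (\<Sum>r\<in>UNIV. \<Sum>q\<in>UNIV. L $ q $ r * ((\<integral>\<omega>. T i k \<omega> $ q $ p \<partial>M) * (\<integral>\<omega>. T j k \<omega> $ r $ s \<partial>M)))"
        unfolding blk_ik[OF i] blk_ik[OF j] entry_tLt
        using indep_var_integrable[OF ind ie[OF i] ie[OF j]] indep_var_lebesgue_integral[OF ind ie[OF i] ie[OF j]]
        by (simp add: Bochner_Integration.integral_sum)
      also have "\<dots> = (\<Sum>r\<in>UNIV. \<Sum>q\<in>UNIV. L $ q $ r * (mat 1 $ q $ p * mat 1 $ r $ s))"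
        using me[OF i] me[OF j] by simp
      also have "\<dots> = (\<Sum>r\<in>UNIV. \<Sum>q\<in>UNIV. if q = p then (if r = s then L $ q $ r else 0) else 0)"
        by (intro sum.cong refl) (simp add: mat_def)
      also have "\<dots> = L $ p $ s" by simp
      finally show ?thesis .
    qed
    then show ?thesis by (simp add: vec_eq_iff)
  qed
  show "integrable M (\<lambda>\<omega>. (D *v gf i (xs k \<omega>)) \<bullet> ((transpose (T i k \<omega>) ** L ** T j k \<omega>) *v (D *v gf j (xs k \<omega>))))"
    using B(1) blk_ik[OF i] blk_ik[OF j] by simp
  show "(\<integral>\<omega>. (D *v gf i (xs k \<omega>)) \<bullet> ((transpose (T i k \<omega>) ** L ** T j k \<omega>) *v (D *v gf j (xs k \<omega>))) \<partial>M)
       = (\<integral>\<omega>. (D *v gf i (xs k \<omega>)) \<bullet> (L *v (D *v gf j (xs k \<omega>))) \<partial>M)"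
    using B(2) E blk_ik[OF i] blk_ik[OF j] by simp
qed

lemma EC:
  assumes i: "i < n"
  shows "integrable M (\<lambda>\<omega>. (D *v gf i (xs k \<omega>)) \<bullet> ((transpose (T i k \<omega>) ** L ** T i k \<omega>) *v (D *v gf i (xs k \<omega>))))"
    and "(\<integral>\<omega>. (D *v gf i (xs k \<omega>)) \<bullet> ((transpose (T i k \<omega>) ** L ** T i k \<omega>) *v (D *v gf i (xs k \<omega>))) \<partial>M)
       = (\<integral>\<omega>. (D *v gf i (xs k \<omega>)) \<bullet> ((L + Zbar) *v (D *v gf i (xs k \<omega>))) \<partial>M)"
proof -
  let ?X = "\<lambda>\<phi> :: nat \<times> nat \<Rightarrow> real^'d^'d. transpose (\<phi> (i, k)) ** L ** \<phi> (i, k)"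
  have uv: "integrable M (\<lambda>\<omega>. (D *v gf i (xs k \<omega>)) $ p * (D *v gf i (xs k \<omega>)) $ q)" for p q
    by (rule int_uv[OF i i])
  have Xi: "integrable M (\<lambda>\<omega>. ?X (blk (Lset k) \<omega>) $ p $ s)" for p s
    unfolding blk_ik[OF i] using integrable_bounded_linear[OF bl_entry X3(1)[OF i, of k]] by simp
  have Xm: "?X \<in> borel_measurable (PiM (Lset k) (\<lambda>_. borel))"
    using meas_ik[OF i, of k] by (intro measurable_mm measurable_transpose borel_measurable_const) auto
  have gm: "(\<lambda>y. D *v gf i y) \<in> borel_measurable borel"
    using i by (auto intro!: measurable_mv)
  note B = bilin[OF gm gm uv Xm Xi]
  have E: "(\<chi> p s. \<integral>\<omega>'. ?X (blk (Lset k) \<omega>') $ p $ s \<partial>M) = L + Zbar"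
  proof -
    have "(\<integral>\<omega>'. ?X (blk (Lset k) \<omega>') $ p $ s \<partial>M) = (L + Zbar) $ p $ s" for p s
      unfolding blk_ik[OF i] using integral_entry[OF X3(1)[OF i, of k], of p s] X3(2)[OF i, of k] by simp
    then show ?thesis by (simp add: vec_eq_iff)
  qed
  show "integrable M (\<lambda>\<omega>. (D *v gf i (xs k \<omega>)) \<bullet> ((transpose (T i k \<omega>) ** L ** T i k \<omega>) *v (D *v gf i (xs k \<omega>))))"
    using B(1) blk_ik[OF i] by simp
  show "(\<integral>\<omega>. (D *v gf i (xs k \<omega>)) \<bullet> ((transpose (T i k \<omega>) ** L ** T i k \<omega>) *v (D *v gf i (xs k \<omega>))) \<partial>M)
       = (\<integral>\<omega>. (D *v gf i (xs k \<omega>)) \<bullet> ((L + Zbar) *v (D *v gf i (xs k \<omega>))) \<partial>M)"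
    using B(2) E blk_ik[OF i] by simp
qed

end


lemma inner_double_sum:
  fixes A :: "real^'n^'n"
  shows "(\<Sum>j\<in>J. a j) \<bullet> (A *v (\<Sum>i\<in>I. b i)) = (\<Sum>j\<in>J. \<Sum>i\<in>I. a j \<bullet> (A *v b i))"
proof -
  have "(\<Sum>j\<in>J. a j) \<bullet> (A *v (\<Sum>i\<in>I. b i)) = (\<Sum>j\<in>J. a j \<bullet> (A *v (\<Sum>i\<in>I. b i)))"
    by (rule inner_sum_left)
  also have "\<dots> = (\<Sum>j\<in>J. \<Sum>i\<in>I. a j \<bullet> (A *v b i))"
    by (simp add: mat_vec_sum inner_sum_right)
  finally show ?thesis .
qed

lemma inner_sum_sum:
  "(\<Sum>j\<in>J. a j) \<bullet> (\<Sum>i\<in>I. b i) = (\<Sum>j\<in>J. \<Sum>i\<in>I. (a j :: 'a::real_inner) \<bullet> b i)"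
proof -
  have "(\<Sum>j\<in>J. a j) \<bullet> (\<Sum>i\<in>I. b i) = (\<Sum>j\<in>J. a j \<bullet> (\<Sum>i\<in>I. b i))"
    by (rule inner_sum_left)
  also have "\<dots> = (\<Sum>j\<in>J. \<Sum>i\<in>I. a j \<bullet> b i)"
    by (simp add: inner_sum_right)
  finally show ?thesis .
qed

context prob_space
begin

lemma int_quad:
  fixes a b :: "'a \<Rightarrow> real^'n" and A :: "real^'n^'n"
  assumes "sqint a" "sqint b"
  shows "integrable M (\<lambda>\<omega>. a \<omega> \<bullet> (A *v b \<omega>))"
  unfolding inner_mv
  by (intro Bochner_Integration.integrable_sum integrable_mult_left sqint_prod assms)

end

context thm4
begin

definition "fa y = (1 / real n) * (\<Sum>i<n. fs i y)"
definition "ga y = (1 / real n) *\<^sub>R (\<Sum>i<n. gf i y)"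

lemma n_gt: "real n > 0" using n_pos by simp

lemma symD: "sym_mat D" using D_pd by (simp add: pd_def)
lemma symL: "sym_mat L" using L_psd by (simp add: psd_def)

lemma P1:
  "fa (y - G) \<le> fa y - ga y \<bullet> G + 1/2 * ((L *v G) \<bullet> G)"
proof -
  have "fa (y - G) \<le> fa y + ga y \<bullet> ((y - G) - y) + 1/2 * ((L *v ((y - G) - y)) \<bullet> ((y - G) - y))"
    using smooth unfolding matrix_smooth_def fa_def[abs_def] ga_def[abs_def] by blast
  moreover have "(y - G) - y = (-1) *\<^sub>R G" by simp
  ultimately show ?thesis by (simp only: matrix_vector_mult_scaleR) simp
qed

lemma P2:
  "ga y \<bullet> ((1 / real n) *\<^sub>R (\<Sum>i<n. Ts i *v (D *v gf i y)))
    = (1 / real n)^2 * (\<Sum>j<n. \<Sum>i<n. gf j y \<bullet> (Ts i *v (D *v gf i y)))"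
  unfolding ga_def inner_scaleR_left inner_scaleR_right inner_sum_sum
  by (simp add: power2_eq_square sum_distrib_left)

lemma P3:
  "(L *v ((1 / real n) *\<^sub>R (\<Sum>i<n. Ts i *v (D *v gf i y)))) \<bullet> ((1 / real n) *\<^sub>R (\<Sum>i<n. Ts i *v (D *v gf i y)))
    = (1 / real n)^2 * (\<Sum>i<n. \<Sum>j<n. (D *v gf i y) \<bullet> ((transpose (Ts i) ** L ** Ts j) *v (D *v gf j y)))"
proof -
  have "(L *v ((1 / real n) *\<^sub>R (\<Sum>i<n. Ts i *v (D *v gf i y)))) \<bullet> ((1 / real n) *\<^sub>R (\<Sum>i<n. Ts i *v (D *v gf i y)))
     = (1 / real n)^2 * ((\<Sum>i<n. Ts i *v (D *v gf i y)) \<bullet> (L *v (\<Sum>j<n. Ts j *v (D *v gf j y))))"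
    using sym_inner[OF symL] by (simp add: matrix_vector_mult_scaleR power2_eq_square inner_commute)
  also have "(\<Sum>i<n. Ts i *v (D *v gf i y)) \<bullet> (L *v (\<Sum>j<n. Ts j *v (D *v gf j y)))
     = (\<Sum>i<n. \<Sum>j<n. (Ts i *v (D *v gf i y)) \<bullet> (L *v (Ts j *v (D *v gf j y))))"
    by (rule inner_double_sum)
  also have "\<dots> = (\<Sum>i<n. \<Sum>j<n. (D *v gf i y) \<bullet> ((transpose (Ts i) ** L ** Ts j) *v (D *v gf j y)))"
  proof (intro sum.cong refl)
    fix i j
    have e: "transpose (Ts i) *v (L *v (Ts j *v w)) = (transpose (Ts i) ** L ** Ts j) *v w" for w
      by (simp add: matrix_vector_mul_assoc matrix_mul_assoc)
    show "(Ts i *v (D *v gf i y)) \<bullet> (L *v (Ts j *v (D *v gf j y))) = (D *v gf i y) \<bullet> ((transpose (Ts i) ** L ** Ts j) *v (D *v gf j y))"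
      by (subst sym_inner_T) (simp only: e)
  qed
  finally show ?thesis .
qed

lemma Q1:
  "ga y \<bullet> (D *v ga y) = (1 / real n)^2 * (\<Sum>j<n. \<Sum>i<n. gf j y \<bullet> (D *v gf i y))"
  unfolding ga_def
  by (simp add: matrix_vector_mult_scaleR inner_double_sum power2_eq_square sum_distrib_left)

lemma Q2:
  "(\<Sum>i<n. \<Sum>j<n. (D *v gf i y) \<bullet> ((if i = j then L + Z else L) *v (D *v gf j y)))
    = real n ^ 2 * ((D *v ga y) \<bullet> (L *v (D *v ga y))) + (\<Sum>i<n. (D *v gf i y) \<bullet> (Z *v (D *v gf i y)))"
proof -
  have "(\<Sum>i<n. \<Sum>j<n. (D *v gf i y) \<bullet> ((if i = j then L + Z else L) *v (D *v gf j y)))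
     = (\<Sum>i<n. \<Sum>j<n. (D *v gf i y) \<bullet> (L *v (D *v gf j y)) + (if i = j then (D *v gf i y) \<bullet> (Z *v (D *v gf j y)) else 0))"
    by (intro sum.cong refl) (simp add: matrix_vector_mult_add_rdistrib inner_add_right)
  also have "\<dots> = (\<Sum>i<n. \<Sum>j<n. (D *v gf i y) \<bullet> (L *v (D *v gf j y))) + (\<Sum>i<n. (D *v gf i y) \<bullet> (Z *v (D *v gf i y)))"
    by (simp add: sum.distrib)
  also have "(\<Sum>i<n. \<Sum>j<n. (D *v gf i y) \<bullet> (L *v (D *v gf j y))) = real n ^ 2 * ((D *v ga y) \<bullet> (L *v (D *v ga y)))"
  proof -
    have "(D *v ga y) = (1 / real n) *\<^sub>R (\<Sum>i<n. D *v gf i y)"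
      unfolding ga_def by (simp add: matrix_vector_mult_scaleR mat_vec_sum)
    then have "(D *v ga y) \<bullet> (L *v (D *v ga y)) = (1 / real n)^2 * (\<Sum>i<n. \<Sum>j<n. (D *v gf i y) \<bullet> (L *v (D *v gf j y)))"
      by (simp add: matrix_vector_mult_scaleR inner_double_sum power2_eq_square)
    then show ?thesis using n_gt by (simp add: power2_eq_square)
  qed
  finally show ?thesis .
qed

lemma Q3: "(D *v ga y) \<bullet> (L *v (D *v ga y)) \<le> ga y \<bullet> (D *v ga y)"
proof -
  have "0 \<le> ga y \<bullet> ((D - D ** L ** D) *v ga y)" using DLD by (simp add: loewner_le_def psd_def)
  moreover have "ga y \<bullet> ((D ** L ** D) *v ga y) = (D *v ga y) \<bullet> (L *v (D *v ga y))"
    using sym_inner[OF symD, of "ga y" "L *v (D *v ga y)"] by (simp add: matrix_vector_mul_assoc[symmetric])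
  ultimately show ?thesis by (simp add: matrix_vector_mult_diff_rdistrib inner_diff_right)
qed

lemma x_Suc: "xs (Suc k) \<omega> = xs k \<omega> - (1 / real n) *\<^sub>R (\<Sum>i<n. T i k \<omega> *v (D *v gf i (xs k \<omega>)))"
  by (simp add: xs_def)

end


context prob_space
begin

lemma int_dsum:
  assumes "\<And>j i. j < n \<Longrightarrow> i < n \<Longrightarrow> integrable M (t j i)"
  shows "integrable M (\<lambda>\<omega>. \<Sum>j<n. \<Sum>i<n. t j i \<omega>)"
    and "(\<integral>\<omega>. (\<Sum>j<n. \<Sum>i<n. t j i \<omega>) \<partial>M) = (\<Sum>j<n. \<Sum>i<n. integral\<^sup>L M (t j i))"
proof -
  have "integrable M (\<lambda>\<omega>. \<Sum>i<n. t j i \<omega>)" if "j < n" for j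
    using assms that by (intro Bochner_Integration.integrable_sum) auto
  then show "integrable M (\<lambda>\<omega>. \<Sum>j<n. \<Sum>i<n. t j i \<omega>)"
    by (rule Bochner_Integration.integrable_sum) auto
  have "(\<integral>\<omega>. (\<Sum>j<n. \<Sum>i<n. t j i \<omega>) \<partial>M) = (\<Sum>j<n. (\<integral>\<omega>. (\<Sum>i<n. t j i \<omega>) \<partial>M))"
    by (rule Bochner_Integration.integral_sum) (use \<open>\<And>j. j < n \<Longrightarrow> _\<close> in auto)
  also have "\<dots> = (\<Sum>j<n. \<Sum>i<n. integral\<^sup>L M (t j i))"
    using assms by (intro sum.cong refl Bochner_Integration.integral_sum) auto
  finally show "(\<integral>\<omega>. (\<Sum>j<n. \<Sum>i<n. t j i \<omega>) \<partial>M) = (\<Sum>j<n. \<Sum>i<n. integral\<^sup>L M (t j i))" .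
qed

lemma int_lin3:
  fixes a b d :: "'a \<Rightarrow> real"
  assumes "integrable M a" "integrable M b" "integrable M d"
  shows "(\<integral>\<omega>. a \<omega> - c * b \<omega> + e * d \<omega> \<partial>M) = integral\<^sup>L M a - c * integral\<^sup>L M b + e * integral\<^sup>L M d"
proof -
  have i1a: "integrable M (\<lambda>\<omega>. c * b \<omega>)"
    by (rule Bochner_Integration.integrable_mult_right, rule assms(2))
  have i1b: "integrable M (\<lambda>\<omega>. e * d \<omega>)"
    by (rule Bochner_Integration.integrable_mult_right, rule assms(3))
  note i1 = i1a i1b
  have i2: "integrable M (\<lambda>\<omega>. a \<omega> - c * b \<omega>)" using assms i1 by auto
  have "(\<integral>\<omega>. a \<omega> - c * b \<omega> + e * d \<omega> \<partial>M) = (\<integral>\<omega>. a \<omega> - c * b \<omega> \<partial>M) + (\<integral>\<omega>. e * d \<omega> \<partial>M)"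
    by (rule Bochner_Integration.integral_add[OF i2 i1(2)])
  also have "(\<integral>\<omega>. a \<omega> - c * b \<omega> \<partial>M) = integral\<^sup>L M a - (\<integral>\<omega>. c * b \<omega> \<partial>M)"
    by (rule Bochner_Integration.integral_diff[OF assms(1) i1(1)])
  finally show ?thesis by simp
qed

end

context thm4
begin

lemma fa_int: "integrable M (\<lambda>\<omega>. fa (xs k \<omega>))"
  unfolding fa_def xs_def by (intro integrable_mult_right Bochner_Integration.integrable_sum fi_int) auto

lemma descent:
  assumes lamb: "\<And>i y. i < n \<Longrightarrow> (D *v gf i y) \<bullet> (Zbar *v (D *v gf i y)) \<le> 2 * lam0 * (fs i y - finf_i i)"
  shows "(\<integral>\<omega>. fa (xs (Suc k) \<omega>) \<partial>M) \<le> (\<integral>\<omega>. fa (xs k \<omega>) \<partial>M)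
     - 1/2 * (\<integral>\<omega>. ga (xs k \<omega>) \<bullet> (D *v ga (xs k \<omega>)) \<partial>M)
     + lam0 / real n ^ 2 * (\<Sum>i<n. (\<integral>\<omega>. fs i (xs k \<omega>) \<partial>M) - finf_i i)"
proof -
  define t1 where "t1 j i \<omega> = gf j (xs k \<omega>) \<bullet> (T i k \<omega> *v (D *v gf i (xs k \<omega>)))" for j i \<omega>
  define s1 where "s1 j i \<omega> = gf j (xs k \<omega>) \<bullet> (D *v gf i (xs k \<omega>))" for j i \<omega>
  define t2 where "t2 i j \<omega> = (D *v gf i (xs k \<omega>)) \<bullet> ((transpose (T i k \<omega>) ** L ** T j k \<omega>) *v (D *v gf j (xs k \<omega>)))" for i j \<omega>
  define s2 where "s2 i j \<omega> = (D *v gf i (xs k \<omega>)) \<bullet> ((if i = j then L + Zbar else L) *v (D *v gf j (xs k \<omega>)))" for i j \<omega>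
  define c where "c = (1 / real n)^2"
  define R where "R \<omega> = fa (xs k \<omega>) - c * (\<Sum>j<n. \<Sum>i<n. t1 j i \<omega>) + (1/2 * c) * (\<Sum>i<n. \<Sum>j<n. t2 i j \<omega>)" for \<omega>
  define Q where "Q \<omega> = fa (xs k \<omega>) - c * (\<Sum>j<n. \<Sum>i<n. s1 j i \<omega>) + (1/2 * c) * (\<Sum>i<n. \<Sum>j<n. s2 i j \<omega>)" for \<omega>
  define B where "B \<omega> = fa (xs k \<omega>) - 1/2 * (ga (xs k \<omega>) \<bullet> (D *v ga (xs k \<omega>))) + lam0 / real n ^ 2 * (\<Sum>i<n. fs i (xs k \<omega>) - finf_i i)" for \<omega>
  have it1: "integrable M (t1 j i)" "integral\<^sup>L M (t1 j i) = integral\<^sup>L M (s1 j i)" if "j < n" "i < n" for j i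
    using EA[OF that(2) that(1), of k] unfolding t1_def[abs_def] s1_def[abs_def] by auto
  have is1: "integrable M (s1 j i)" if "j < n" "i < n" for j i
    unfolding s1_def[abs_def] by (intro int_quad sqint_g that)
  have it2: "integrable M (t2 i j)" "integral\<^sup>L M (t2 i j) = integral\<^sup>L M (s2 i j)" if "i < n" "j < n" for i j
  proof -
    show "integrable M (t2 i j)"
      using EB(1)[OF that, of k] EC(1)[OF that(1), of k] unfolding t2_def[abs_def] by (cases "i = j") auto
    show "integral\<^sup>L M (t2 i j) = integral\<^sup>L M (s2 i j)"
      using EB(2)[OF that, of k] EC(2)[OF that(1), of k] unfolding t2_def[abs_def] s2_def[abs_def] by (cases "i = j") auto
  qed
  have is2: "integrable M (s2 i j)" if "i < n" "j < n" for i j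
    unfolding s2_def[abs_def] by (intro int_quad sqint_mv sqint_g that)
  have iR: "integrable M R" unfolding R_def[abs_def] by (intro Bochner_Integration.integrable_add Bochner_Integration.integrable_diff integrable_mult_right Bochner_Integration.integrable_sum it1 it2 fa_int) auto
  have iQ: "integrable M Q" unfolding Q_def[abs_def] by (intro Bochner_Integration.integrable_add Bochner_Integration.integrable_diff integrable_mult_right Bochner_Integration.integrable_sum is1 is2 fa_int) auto
  have step1: "fa (xs (Suc k) \<omega>) \<le> R \<omega>" for \<omega>
  proof -
    let ?G = "(1 / real n) *\<^sub>R (\<Sum>i<n. T i k \<omega> *v (D *v gf i (xs k \<omega>)))"
    have "fa (xs (Suc k) \<omega>) \<le> fa (xs k \<omega>) - ga (xs k \<omega>) \<bullet> ?G + 1/2 * ((L *v ?G) \<bullet> ?G)"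
      unfolding x_Suc by (rule P1)
    also have "\<dots> = R \<omega>"
      unfolding R_def P2 P3 c_def t1_def t2_def by (simp only: mult.assoc)
    finally show ?thesis .
  qed
  have RQ: "integral\<^sup>L M R = integral\<^sup>L M Q"
  proof -
    note d1 = int_dsum[of n t1, OF it1(1)] and d2 = int_dsum[of n t2, OF it2(1)]
    note d3 = int_dsum[of n s1, OF is1] and d4 = int_dsum[of n s2, OF is2]
    have "integral\<^sup>L M R = (\<integral>\<omega>. fa (xs k \<omega>) \<partial>M) - c * (\<Sum>j<n. \<Sum>i<n. integral\<^sup>L M (t1 j i)) + (1/2 * c) * (\<Sum>i<n. \<Sum>j<n. integral\<^sup>L M (t2 i j))"
      unfolding R_def[abs_def] by (simp only: int_lin3[OF fa_int d1(1) d2(1)] d1(2) d2(2))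
    also have "\<dots> = (\<integral>\<omega>. fa (xs k \<omega>) \<partial>M) - c * (\<Sum>j<n. \<Sum>i<n. integral\<^sup>L M (s1 j i)) + (1/2 * c) * (\<Sum>i<n. \<Sum>j<n. integral\<^sup>L M (s2 i j))"
      using it1(2) it2(2) by simp
    also have "\<dots> = integral\<^sup>L M Q"
      unfolding Q_def[abs_def] by (simp only: int_lin3[OF fa_int d3(1) d4(1)] d3(2) d4(2))
    finally show ?thesis .
  qed
  have QB: "Q \<omega> \<le> B \<omega>" for \<omega>
  proof -
    let ?y = "xs k \<omega>"
    have e1: "c * (\<Sum>j<n. \<Sum>i<n. s1 j i \<omega>) = ga ?y \<bullet> (D *v ga ?y)"
      unfolding c_def s1_def Q1 ..
    have e2: "c * (\<Sum>i<n. \<Sum>j<n. s2 i j \<omega>) = (D *v ga ?y) \<bullet> (L *v (D *v ga ?y)) + c * (\<Sum>i<n. (D *v gf i ?y) \<bullet> (Zbar *v (D *v gf i ?y)))"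
      unfolding s2_def Q2 c_def using n_gt by (simp add: power2_eq_square distrib_left)
    have e3: "(\<Sum>i<n. (D *v gf i ?y) \<bullet> (Zbar *v (D *v gf i ?y))) \<le> (\<Sum>i<n. 2 * lam0 * (fs i ?y - finf_i i))"
      by (intro sum_mono lamb) auto
    have c0: "c \<ge> 0" by (simp add: c_def)
    have e4: "c * (\<Sum>i<n. 2 * lam0 * (fs i ?y - finf_i i)) = 2 * (lam0 / real n ^ 2 * (\<Sum>i<n. fs i ?y - finf_i i))"
      by (simp add: c_def sum_distrib_left power2_eq_square mult_ac)
    have "c * (\<Sum>i<n. (D *v gf i ?y) \<bullet> (Zbar *v (D *v gf i ?y))) \<le> c * (\<Sum>i<n. 2 * lam0 * (fs i ?y - finf_i i))"
      using e3 c0 by (rule mult_left_mono)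
    moreover have e2': "(1/2 * c) * (\<Sum>i<n. \<Sum>j<n. s2 i j \<omega>) = 1/2 * ((D *v ga ?y) \<bullet> (L *v (D *v ga ?y)) + c * (\<Sum>i<n. (D *v gf i ?y) \<bullet> (Zbar *v (D *v gf i ?y))))"
      by (subst mult.assoc) (simp only: e2)
    moreover have "1/2 * ((D *v ga ?y) \<bullet> (L *v (D *v ga ?y)) + c * (\<Sum>i<n. (D *v gf i ?y) \<bullet> (Zbar *v (D *v gf i ?y))))
       = 1/2 * ((D *v ga ?y) \<bullet> (L *v (D *v ga ?y))) + 1/2 * (c * (\<Sum>i<n. (D *v gf i ?y) \<bullet> (Zbar *v (D *v gf i ?y))))"
      by (rule distrib_left)
    ultimately show ?thesis unfolding Q_def B_def e1 e2' e4 using Q3[of ?y] by linarith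
  qed
  have iB: "integrable M B"
  proof -
    have "B = (\<lambda>\<omega>. fa (xs k \<omega>) - 1/2 * (c * (\<Sum>j<n. \<Sum>i<n. s1 j i \<omega>)) + lam0 / real n ^ 2 * (\<Sum>i<n. fs i (xs k \<omega>) - finf_i i))"
      unfolding B_def c_def s1_def Q1 ..
    moreover have "integrable M (\<lambda>\<omega>. fs i (xs k \<omega>))" if "i < n" for i using fi_int[OF that] by (simp add: xs_def)
    ultimately show ?thesis by (simp only:) (intro Bochner_Integration.integrable_add Bochner_Integration.integrable_diff integrable_mult_right Bochner_Integration.integrable_sum is1 fa_int integrable_const; auto)
  qed
  have "(\<integral>\<omega>. fa (xs (Suc k) \<omega>) \<partial>M) \<le> integral\<^sup>L M R"
    using fa_int iR step1 by (intro integral_mono) auto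
  also have "\<dots> = integral\<^sup>L M Q" by (rule RQ)
  also have "\<dots> \<le> integral\<^sup>L M B" using iQ iB QB by (intro integral_mono) auto
  also have "\<dots> = (\<integral>\<omega>. fa (xs k \<omega>) \<partial>M) - 1/2 * (\<integral>\<omega>. ga (xs k \<omega>) \<bullet> (D *v ga (xs k \<omega>)) \<partial>M)
     + lam0 / real n ^ 2 * (\<Sum>i<n. (\<integral>\<omega>. fs i (xs k \<omega>) \<partial>M) - finf_i i)"
  proof -
    have ig: "integrable M (\<lambda>\<omega>. ga (xs k \<omega>) \<bullet> (D *v ga (xs k \<omega>)))"
    proof -
      have "(\<lambda>\<omega>. ga (xs k \<omega>) \<bullet> (D *v ga (xs k \<omega>))) = (\<lambda>\<omega>. c * (\<Sum>j<n. \<Sum>i<n. s1 j i \<omega>))"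
        unfolding c_def s1_def Q1 ..
      then show ?thesis by (simp only:) (intro Bochner_Integration.integrable_add Bochner_Integration.integrable_diff integrable_mult_right Bochner_Integration.integrable_sum is1; auto)
    qed
    have ifs: "integrable M (\<lambda>\<omega>. fs i (xs k \<omega>))" if "i < n" for i using fi_int[OF that] by (simp add: xs_def)
    have id: "integrable M (\<lambda>\<omega>. \<Sum>i<n. fs i (xs k \<omega>) - finf_i i)"
      using ifs by (intro Bochner_Integration.integrable_sum Bochner_Integration.integrable_diff) auto
    have "(\<integral>\<omega>. (\<Sum>i<n. fs i (xs k \<omega>) - finf_i i) \<partial>M) = (\<Sum>i<n. (\<integral>\<omega>. fs i (xs k \<omega>) - finf_i i \<partial>M))"
      using ifs by (intro Bochner_Integration.integral_sum Bochner_Integration.integrable_diff) auto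
    also have "\<dots> = (\<Sum>i<n. (\<integral>\<omega>. fs i (xs k \<omega>) \<partial>M) - finf_i i)"
      using ifs prob_space by (intro sum.cong refl) (simp add: Bochner_Integration.integral_diff)
    finally have ed: "(\<integral>\<omega>. (\<Sum>i<n. fs i (xs k \<omega>) - finf_i i) \<partial>M) = (\<Sum>i<n. (\<integral>\<omega>. fs i (xs k \<omega>) \<partial>M) - finf_i i)" .
    show ?thesis unfolding B_def[abs_def] by (simp only: int_lin3[OF fa_int ig id] ed)
  qed
  finally show ?thesis .
qed

end


lemma transpose_diff_mat: "transpose (A - mat 1 :: real^'n^'n) = transpose A - mat 1"
  by (simp add: transpose_def mat_def vec_eq_iff)

lemma psd_sandwich:
  fixes P L :: "real^'n^'n"
  assumes "psd L"
  shows "0 \<le> h \<bullet> ((P ** L ** transpose P) *v h)"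
proof -
  have "h \<bullet> ((P ** L ** transpose P) *v h) = h \<bullet> (P *v (L *v (transpose P *v h)))"
    by (simp only: matrix_vector_mul_assoc matrix_mul_assoc)
  also have "\<dots> = (transpose P *v h) \<bullet> (L *v (transpose P *v h))"
    by (metis sym_inner_T transpose_transpose)
  also have "\<dots> \<ge> 0" using assms by (simp add: psd_def)
  finally show ?thesis .
qed

context thm4
begin

definition "ES i = integral\<^sup>L M (\<lambda>\<omega>.
   msqrt (Ls i) ** D ** (T i 0 \<omega> - mat 1) ** L ** (T i 0 \<omega> - mat 1) ** D ** msqrt (Ls i))"

definition "lam = Max ((\<lambda>i. lambda_max (ES i)) ` {..<n})"

lemma ES_eq:
  assumes i: "i < n"
  shows "ES i = msqrt (Ls i) ** D ** Zbar ** D ** msqrt (Ls i)"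
proof -
  let ?S = "msqrt (Ls i)"
  have "ES i = integral\<^sup>L M (\<lambda>\<omega>. (?S ** D) ** ((T i 0 \<omega> - mat 1) ** L ** (T i 0 \<omega> - mat 1)) ** (D ** ?S))"
    unfolding ES_def by (simp only: matrix_mul_assoc)
  also have "\<dots> = (?S ** D) ** Zbar ** (D ** ?S)"
    using integral_bounded_linear[OF bl_mm Z_int[OF i, of 0]] Z_mean[OF i, of 0] by simp
  finally show ?thesis by (simp only: matrix_mul_assoc)
qed

lemma ES_sym_psd:
  assumes i: "i < n"
  shows "sym_mat (ES i)" "psd (ES i)"
proof -
  let ?S = "msqrt (Ls i)"
  let ?Y = "\<lambda>\<omega>. ?S ** D ** (T i 0 \<omega> - mat 1) ** L ** (T i 0 \<omega> - mat 1) ** D ** ?S"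
  let ?P = "\<lambda>\<omega>. ?S ** D ** (T i 0 \<omega> - mat 1)"
  have pd: "pd (Ls i)" using smooth_i[OF i] by auto
  have Ssym: "transpose ?S = ?S" using msqrt_pd(3)[OF pd] by (simp add: sym_mat_def)
  have Dsym: "transpose D = D" using symD by (simp add: sym_mat_def)
  have Lsym: "transpose L = L" using symL by (simp add: sym_mat_def)
  have iY: "integrable M ?Y" using lam_int[OF i] .
  have aeP: "AE \<omega> in M. ?Y \<omega> = ?P \<omega> ** L ** transpose (?P \<omega>)"
    using T_sym[where k=0, OF i]
    by eventually_elim (simp add: matrix_transpose_mul transpose_diff_mat Ssym Dsym matrix_mul_assoc)
  have aeT: "AE \<omega> in M. transpose (?Y \<omega>) = ?Y \<omega>"
    using T_sym[where k=0, OF i]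
    by eventually_elim (simp add: matrix_transpose_mul transpose_diff_mat Ssym Dsym Lsym matrix_mul_assoc)
  have mY: "?Y \<in> borel_measurable M" using iY by auto
  have "transpose (ES i) = integral\<^sup>L M (\<lambda>\<omega>. transpose (?Y \<omega>))"
    unfolding ES_def using integral_bounded_linear[OF bl_transpose iY] by simp
  also have "\<dots> = ES i" unfolding ES_def
    using aeT by (intro integral_cong_AE) (auto intro: measurable_transpose[OF mY] mY)
  finally show sy: "sym_mat (ES i)" by (simp add: sym_mat_def)
  have "0 \<le> h \<bullet> (ES i *v h)" for h
  proof -
    have "h \<bullet> (ES i *v h) = (\<integral>\<omega>. h \<bullet> (?Y \<omega> *v h) \<partial>M)"
      unfolding ES_def using integral_bounded_linear[OF bl_quad iY] by simp
    also have "\<dots> \<ge> 0"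
    proof -
      have "AE \<omega> in M. 0 \<le> h \<bullet> (?Y \<omega> *v h)"
        using aeP by eventually_elim (simp only: psd_sandwich[OF L_psd])
      then show ?thesis by (rule integral_nonneg_AE)
    qed
    finally show ?thesis .
  qed
  then show "psd (ES i)" using sy by (simp add: psd_def)
qed

lemma lam_ge: "i < n \<Longrightarrow> lambda_max (ES i) \<le> lam"
  unfolding lam_def by (intro Max_ge) auto

lemma lam_nonneg: "lam \<ge> 0"
proof -
  have "0 < n" using n_pos by simp
  then have "0 \<le> lambda_max (ES 0)" using lambda_max_bound(2)[OF ES_sym_psd] by blast
  also have "\<dots> \<le> lam" using lam_ge \<open>0 < n\<close> by blast
  finally show ?thesis .
qed

lemma lamb:
  assumes i: "i < n"
  shows "(D *v gf i y) \<bullet> (Zbar *v (D *v gf i y)) \<le> 2 * lam * (fs i y - finf_i i)"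
proof -
  let ?S = "msqrt (Ls i)"
  have pd: "pd (Ls i)" using smooth_i[OF i] by auto
  have Ssym: "transpose ?S = ?S" using msqrt_pd(3)[OF pd] by (simp add: sym_mat_def)
  have Dsym: "transpose D = D" using symD by (simp add: sym_mat_def)
  obtain h where h: "gf i y = ?S *v h" "h \<bullet> h \<le> 2 * (fs i y - finf_i i)" using grad_bound[OF i] by blast
  have "(D *v gf i y) \<bullet> (Zbar *v (D *v gf i y)) = h \<bullet> (ES i *v h)"
  proof -
    have "(D *v gf i y) \<bullet> (Zbar *v (D *v gf i y)) = ((D ** ?S) *v h) \<bullet> ((Zbar ** (D ** ?S)) *v h)"
      using h(1) by (simp add: matrix_vector_mul_assoc)
    also have "\<dots> = h \<bullet> ((transpose (D ** ?S) ** (Zbar ** (D ** ?S))) *v h)"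
      by (simp add: sym_inner_T matrix_vector_mul_assoc)
    also have "transpose (D ** ?S) ** (Zbar ** (D ** ?S)) = ES i"
      unfolding ES_eq[OF i] by (simp add: matrix_transpose_mul Ssym Dsym matrix_mul_assoc)
    finally show ?thesis .
  qed
  also have "\<dots> \<le> lambda_max (ES i) * (h \<bullet> h)" by (rule lambda_max_bound(1)[OF ES_sym_psd(1)[OF i]])
  also have "\<dots> \<le> lam * (h \<bullet> h)" using lam_ge[OF i] by (intro mult_right_mono) auto
  also have "\<dots> \<le> lam * (2 * (fs i y - finf_i i))" using h(2) lam_nonneg by (intro mult_left_mono) auto
  finally show ?thesis by (simp add: algebra_simps)
qed

end


context thm4
begin

lemma final:
  assumes K: "K \<ge> 1"
  shows "Min ((\<lambda>k. \<integral>\<omega>. qnorm2 ((1 / (det D powr (1 / real CARD('d)))) *\<^sub>R D) (ga (xs k \<omega>)) \<partial>M) ` {..<K})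
    \<le> 2 * (1 + lam / real n) ^ K * (fa x0 - finf) / ((det D powr (1 / real CARD('d))) * real K)
      + 2 * lam * (finf - (1 / real n) * (\<Sum>i<n. finf_i i)) / ((det D powr (1 / real CARD('d))) * real n)"
proof -
  define c where "c = det D powr (1 / real CARD('d))"
  define \<Delta> where "\<Delta> = finf - (1 / real n) * (\<Sum>i<n. finf_i i)"
  have c: "c > 0" unfolding c_def using det_pd_pos[OF D_pd] by simp
  define \<delta> where "\<delta> k = (\<integral>\<omega>. fa (xs k \<omega>) \<partial>M) - finf" for k
  define r where "r k = (\<integral>\<omega>. qnorm2 ((1 / c) *\<^sub>R D) (ga (xs k \<omega>)) \<partial>M)" for k
  have rG: "(\<integral>\<omega>. ga (xs k \<omega>) \<bullet> (D *v ga (xs k \<omega>)) \<partial>M) = c * r k" for k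
  proof -
    have "qnorm2 ((1 / c) *\<^sub>R D) v = (1 / c) * (v \<bullet> (D *v v))" for v
      unfolding qnorm2_def by (simp add: scaleR_matrix_vector_assoc[symmetric] inner_commute)
    then have "r k = (1 / c) * (\<integral>\<omega>. ga (xs k \<omega>) \<bullet> (D *v ga (xs k \<omega>)) \<partial>M)"
      unfolding r_def by simp
    then show ?thesis using c by simp
  qed
  have d0: "\<delta> k \<ge> 0" for k
  proof -
    have "finf \<le> (\<integral>\<omega>. fa (xs k \<omega>) \<partial>M)"
      using fa_int lower by (intro integral_ge_const) (auto simp: fa_def)
    then show ?thesis by (simp add: \<delta>_def)
  qed
  have Efa: "(\<integral>\<omega>. fa (xs k \<omega>) \<partial>M) = (1 / real n) * (\<Sum>i<n. (\<integral>\<omega>. fs i (xs k \<omega>) \<partial>M))" for k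
  proof -
    have "(\<integral>\<omega>. fa (xs k \<omega>) \<partial>M) = (1 / real n) * (\<integral>\<omega>. (\<Sum>i<n. fs i (xs k \<omega>)) \<partial>M)"
      unfolding fa_def by (rule integral_mult_right_zero)
    also have "(\<integral>\<omega>. (\<Sum>i<n. fs i (xs k \<omega>)) \<partial>M) = (\<Sum>i<n. (\<integral>\<omega>. fs i (xs k \<omega>) \<partial>M))"
      using fi_int by (intro Bochner_Integration.integral_sum) (auto simp: xs_def)
    finally show ?thesis .
  qed
  have rec: "\<delta> (Suc k) \<le> (1 + lam / real n) * \<delta> k - (c / 2) * r k + lam * \<Delta> / real n" for k
  proof -
    have D: "(\<integral>\<omega>. fa (xs (Suc k) \<omega>) \<partial>M) \<le> (\<integral>\<omega>. fa (xs k \<omega>) \<partial>M)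
      - 1/2 * (c * r k) + lam / real n ^ 2 * (\<Sum>i<n. (\<integral>\<omega>. fs i (xs k \<omega>) \<partial>M) - finf_i i)"
      using descent[OF lamb, of k] rG[of k] by simp
    have "(\<Sum>i<n. (\<integral>\<omega>. fs i (xs k \<omega>) \<partial>M) - finf_i i) = real n * (\<integral>\<omega>. fa (xs k \<omega>) \<partial>M) - (\<Sum>i<n. finf_i i)"
      using Efa[of k] n_gt by (simp add: sum_subtractf)
    also have "\<dots> = real n * (\<delta> k + \<Delta>)"
      using n_gt by (simp add: \<delta>_def \<Delta>_def algebra_simps)
    finally have S: "lam / real n ^ 2 * (\<Sum>i<n. (\<integral>\<omega>. fs i (xs k \<omega>) \<partial>M) - finf_i i) = lam / real n * \<delta> k + lam * \<Delta> / real n"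
      using n_gt by (simp add: power2_eq_square field_simps)
    show ?thesis using D unfolding S \<delta>_def by (simp add: algebra_simps)
  qed
  have x0: "xs 0 \<omega> = x0" for \<omega> by (simp add: xs_def)
  have dz: "\<delta> 0 = fa x0 - finf" unfolding \<delta>_def x0 using prob_space by simp
  have a0: "lam / real n \<ge> 0" using lam_nonneg by simp
  have "Min (r ` {..<K}) \<le> 2 * (1 + lam / real n) ^ K * \<delta> 0 / (c * real K) + 2 * (lam * \<Delta> / real n) / c"
    by (rule telescope[where \<delta>=\<delta> and r=r, OF a0 c d0 rec K])
  also have "2 * (lam * \<Delta> / real n) / c = 2 * lam * \<Delta> / (c * real n)" by (simp add: mult.commute mult.assoc)
  finally show ?thesis unfolding r_def c_def dz \<Delta>_def .
qed

end

theorem theorem4: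
  fixes M :: "'a measure"
    and n :: nat
    and fs :: "nat \<Rightarrow> real^'d \<Rightarrow> real"
    and gf :: "nat \<Rightarrow> real^'d \<Rightarrow> real^'d"
    and finf_i :: "nat \<Rightarrow> real"
    and finf :: real
    and Ls :: "nat \<Rightarrow> real^'d^'d"
    and L D :: "real^'d^'d"
    and T :: "nat \<Rightarrow> nat \<Rightarrow> 'a \<Rightarrow> real^'d^'d"
    and Tdist :: "(real^'d^'d) measure"
    and x0 :: "real^'d"
    and K :: nat
  defines "f \<equiv> (\<lambda>x. (1 / real n) * (\<Sum>i<n. fs i x))"
    and "gradf \<equiv> (\<lambda>x. (1 / real n) *\<^sub>R (\<Sum>i<n. gf i x))"
    and "x \<equiv> iter n gf T D x0"
    and "c \<equiv> det D powr (1 / real CARD('d))"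
    and "Delta \<equiv> finf - (1 / real n) * (\<Sum>i<n. finf_i i)"
    and "lam \<equiv> Max ((\<lambda>i. lambda_max (integral\<^sup>L M (\<lambda>\<omega>.
               msqrt (Ls i) ** D ** (T i 0 \<omega> - mat 1) ** L ** (T i 0 \<omega> - mat 1) ** D ** msqrt (Ls i))))
             ` {..<n})"
  assumes n_pos: "n \<ge> 1"
    and grad_i: "\<And>i y. i < n \<Longrightarrow> (fs i has_derivative (\<lambda>h. gf i y \<bullet> h)) (at y)"
    and lower_i: "\<And>i y. i < n \<Longrightarrow> finf_i i \<le> fs i y"
    and smooth_i: "\<And>i. i < n \<Longrightarrow> pd (Ls i) \<and> matrix_smooth (Ls i) (fs i) (gf i)"
    and lower: "\<And>y. finf \<le> f y"
    and L_psd: "psd L"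
    and smooth: "matrix_smooth L f gradf"
    and P: "prob_space M"
    and T_meas: "\<And>i k. i < n \<Longrightarrow> T i k \<in> borel_measurable M"
    and T_indep: "prob_space.indep_vars M (\<lambda>_. borel) (\<lambda>(i, k). T i k) ({..<n} \<times> UNIV)"
    and T_dist: "\<And>i k. i < n \<Longrightarrow> distr M borel (T i k) = Tdist"
    and T_psd: "\<And>i k. i < n \<Longrightarrow> AE \<omega> in M. psd (T i k \<omega>)"
    and T_int: "\<And>i k. i < n \<Longrightarrow> integrable M (T i k)"
    and T_mean: "\<And>i k. i < n \<Longrightarrow> integral\<^sup>L M (T i k) = mat 1"
    and lam_int: "\<And>i k. i < n \<Longrightarrow> integrable M (\<lambda>\<omega>.
               msqrt (Ls i) ** D ** (T i k \<omega> - mat 1) ** L ** (T i k \<omega> - mat 1) ** D ** msqrt (Ls i))"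
    and f_int: "\<And>k. integrable M (\<lambda>\<omega>. f (x k \<omega>))"
    and fi_int: "\<And>i k. i < n \<Longrightarrow> integrable M (\<lambda>\<omega>. fs i (x k \<omega>))"
    and g_int: "\<And>k. integrable M (\<lambda>\<omega>. qnorm2 ((1 / c) *\<^sub>R D) (gradf (x k \<omega>)))"
    and D_pd: "pd D"
    and DLD: "loewner_le (D ** L ** D) D"
    and K_pos: "K \<ge> 1"
  shows "Min ((\<lambda>k. integral\<^sup>L M (\<lambda>\<omega>. qnorm2 ((1 / c) *\<^sub>R D) (gradf (x k \<omega>)))) ` {..<K})
         \<le> 2 * (1 + lam / real n) ^ K * (f x0 - finf) / (c * real K)
           + 2 * lam * Delta / (c * real n)"
proof -
  have "thm4 M n fs gf T D x0 finf_i finf Ls L Tdist"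
    by (intro thm4.intro thm4p.intro thm4p_axioms.intro thm4_axioms.intro P)
      (use grad_i T_meas T_indep n_pos lower_i smooth_i lower L_psd smooth T_dist T_psd T_int T_mean lam_int fi_int D_pd DLD
       in \<open>simp_all add: f_def gradf_def x_def\<close>)
  then interpret I: thm4 M n fs gf T D x0 finf_i finf Ls L Tdist .
  have e1: "I.lam = lam" unfolding I.lam_def I.ES_def lam_def ..
  have e2: "I.ga = gradf" unfolding I.ga_def[abs_def] gradf_def ..
  have e3: "I.fa = f" unfolding I.fa_def[abs_def] f_def ..
  have e4: "I.xs = x" unfolding I.xs_def x_def ..
  show ?thesis using I.final[OF K_pos] unfolding e1 e2 e3 e4 c_def Delta_def .
qed

end
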